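(* In the boundary-driven switching system with $\epsilon\in(0,1]$, $\gamma>0$, $N\ge2$, let $\vec\rho=(\rho_{L,0},\rho_{L,1},\rho_{R,0},\rho_{R,1})^T$. Then for all $x\in V$, $$\theta_0(x)=(\vec c_1\cdot\vec\rho)x+\vec c_2\cdot\vec\rho+\epsilon(\vec c_3\cdot\vec\rho)\alpha_1^x+\epsilon(\vec c_4\cdot\vec\rho)\alpha_2^x,\qquad \theta_1(x)=(\vec c_1\cdot\vec\rho)x+\vec c_2\cdot\vec\rho-(\vec c_3\cdot\vec\rho)\alpha_1^x-(\vec c_4\cdot\vec\rho)\alpha_2^x.$$
   Context: Boundary-driven switching system: fix $\sigma\in\{-1,0,1\}$, $N\in\mathbb N$, $V=\{1,\dots,N\}$, $\epsilon\in[0,1]$, $\gamma>0$, and reservoir parameters $\rho_{L,0},\rho_{L,1},\rho_{R,0},\rho_{R,1}\ge0$ (in $[0,1]$ if $\sigma=-1$). Configurations are $\eta=(\eta_0(x),\eta_1(x))_{x\in V}$ with values in $\{0,1\}$ if $\sigma=-1$ and in $\mathbb N_0$ if $\sigma\in\{0,1\}$. Writing $\delta_{(x,i)}$ for one particle at site $x$ in layer $i$, the continuous-time Markov chain has transitions: for $x\in\{1,\dots,N-1\}$, $i\in\{0,1\}$, $\eta\to\eta-\delta_{(x,i)}+\delta_{(x+1,i)}$ at rate $\epsilon^i\eta_i(x)(1+\sigma\eta_i(x+1))$ and $\eta\to\eta-\delta_{(x+1,i)}+\delta_{(x,i)}$ at rate $\epsilon^i\eta_i(x+1)(1+\sigma\eta_i(x))$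 ($\epsilon^0=1$); for $x\in V$, $\eta\to\eta-\delta_{(x,i)}+\delta_{(x,1-i)}$ at rate $\gamma\eta_i(x)(1+\sigma\eta_{1-i}(x))$; and for $i\in\{0,1\}$, $\eta\to\eta-\delta_{(1,i)}$ at rate $\eta_i(1)(1+\sigma\rho_{L,i})$, $\eta\to\eta+\delta_{(1,i)}$ at rate $\rho_{L,i}(1+\sigma\eta_i(1))$, $\eta\to\eta-\delta_{(N,i)}$ at rate $\eta_i(N)(1+\sigma\rho_{R,i})$, $\eta\to\eta+\delta_{(N,i)}$ at rate $\rho_{R,i}(1+\sigma\eta_i(N))$. This chain has a unique stationary distribution $\mu_{stat}$, and $\theta_i(x):=\mathbb E_{\mu_{stat}}[\eta_i(x)]$ is the stationary microscopic profile. Let $\alpha_1<\alpha_2$ be the two roots of $\epsilon\alpha^2-(\gamma(1+\epsilon)+2\epsilon)\alpha+\epsilon=0$, i.e. $\alpha_{1,2}=1+\frac\gamma2(1+\frac1\epsilon)\mp\sqrt{[1+\frac\gamma2(1+\frac1\epsilon)]^2-1}$. Let $$M_\epsilon=\begin{pmatrix}0&1&\epsilon&\epsilon\\ 1-\epsilon&1&(\epsilon-1)\alpha_1-\epsilon&(\epsilon-1)\alpha_2-\epsilon\\ N+1&1&\epsilon\alpha_1^{N+1}&\epsilon\alpha_2^{N+1}\\ N+\epsilon&1&-\alpha_1^N(\epsilon\alpha_1+1-\epsilon)&-\alpha_2^N(\epsilon\alpha_2+1-\epsilon)\end{pmatrix}$$ (an invertible matrix), and for $k\in\{1,2,3,4\}$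 let $\vec c_k=(M_\epsilon^{-1})^T\vec e_k\in\mathbb R^4$ (the transpose of the $k$-th row of $M_\epsilon^{-1}$). *)

theory Defs
  imports "HOL-Analysis.Analysis" "HOL-Probability.Probability"
begin

text \<open>A configuration: eta i x = number of particles in layer i (0 or 1) at site x (1..N).\<close>
type_synonym cfg = "nat \<Rightarrow> nat \<Rightarrow> nat"

definition valid_cfg :: "int \<Rightarrow> nat \<Rightarrow> cfg \<Rightarrow> bool" where
  "valid_cfg \<sigma> N \<eta> \<longleftrightarrow>
     (\<forall>i x. (i \<notin> {0,1} \<or> x \<notin> {1..N}) \<longrightarrow> \<eta> i x = 0) \<and>
     (\<sigma> = -1 \<longrightarrow> (\<forall>i x. \<eta> i x \<le> 1))"

definition rem_p :: "cfg \<Rightarrow> nat \<Rightarrow> nat \<Rightarrow> cfg" where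
  "rem_p \<eta> i x = \<eta>(i := (\<eta> i)(x := \<eta> i x - 1))"
definition add_p :: "cfg \<Rightarrow> nat \<Rightarrow> nat \<Rightarrow> cfg" where
  "add_p \<eta> i x = \<eta>(i := (\<eta> i)(x := \<eta> i x + 1))"

definition move_p :: "cfg \<Rightarrow> nat \<Rightarrow> nat \<Rightarrow> nat \<Rightarrow> nat \<Rightarrow> cfg" where
  "move_p \<eta> i x j y = add_p (rem_p \<eta> i x) j y"

text \<open>All transitions out of eta, as (target, rate) pairs.
  Reservoir parameters rL i, rR i stand for rho_{L,i}, rho_{R,i}.\<close>
definition transitions ::
  "int \<Rightarrow> nat \<Rightarrow> real \<Rightarrow> real \<Rightarrow> (nat \<Rightarrow> real) \<Rightarrow> (nat \<Rightarrow> real) \<Rightarrow> cfg \<Rightarrow> (cfg \<times> real) list" where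
  "transitions \<sigma> N \<epsilon> \<gamma> rL rR \<eta> =
     concat (map (\<lambda>i. concat (map (\<lambda>x.
        [(move_p \<eta> i x i (x+1), \<epsilon>^i * real (\<eta> i x) * (1 + of_int \<sigma> * real (\<eta> i (x+1)))),
         (move_p \<eta> i (x+1) i x, \<epsilon>^i * real (\<eta> i (x+1)) * (1 + of_int \<sigma> * real (\<eta> i x)))])
       [1..<N])) [0,1])
   @ concat (map (\<lambda>i. map (\<lambda>x.
        (move_p \<eta> i x (1-i) x, \<gamma> * real (\<eta> i x) * (1 + of_int \<sigma> * real (\<eta> (1-i) x))))
       [1..<N+1]) [0,1])
   @ concat (map (\<lambda>i.
        [(rem_p \<eta> i 1, real (\<eta> i 1) * (1 + of_int \<sigma> * rL i)),
         (add_p \<eta> i 1, rL i * (1 + of_int \<sigma> * real (\<eta> i 1))),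
         (rem_p \<eta> i N, real (\<eta> i N) * (1 + of_int \<sigma> * rR i)),
         (add_p \<eta> i N, rR i * (1 + of_int \<sigma> * real (\<eta> i N)))]) [0,1])"

definition jump_rate ::
  "int \<Rightarrow> nat \<Rightarrow> real \<Rightarrow> real \<Rightarrow> (nat \<Rightarrow> real) \<Rightarrow> (nat \<Rightarrow> real) \<Rightarrow> cfg \<Rightarrow> cfg \<Rightarrow> real" where
  "jump_rate \<sigma> N \<epsilon> \<gamma> rL rR \<xi> \<eta> =
     sum_list (map snd (filter (\<lambda>p. fst p = \<eta>) (transitions \<sigma> N \<epsilon> \<gamma> rL rR \<xi>)))"

definition exit_rate ::
  "int \<Rightarrow> nat \<Rightarrow> real \<Rightarrow> real \<Rightarrow> (nat \<Rightarrow> real) \<Rightarrow> (nat \<Rightarrow> real) \<Rightarrow> cfg \<Rightarrow> real" where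
  "exit_rate \<sigma> N \<epsilon> \<gamma> rL rR \<eta> = sum_list (map snd (transitions \<sigma> N \<epsilon> \<gamma> rL rR \<eta>))"

definition stationary ::
  "int \<Rightarrow> nat \<Rightarrow> real \<Rightarrow> real \<Rightarrow> (nat \<Rightarrow> real) \<Rightarrow> (nat \<Rightarrow> real) \<Rightarrow> cfg pmf \<Rightarrow> bool" where
  "stationary \<sigma> N \<epsilon> \<gamma> rL rR \<mu> \<longleftrightarrow>
     set_pmf \<mu> \<subseteq> {\<eta>. valid_cfg \<sigma> N \<eta>} \<and>
     (\<forall>\<eta>. valid_cfg \<sigma> N \<eta> \<longrightarrow>
        infsum (\<lambda>\<xi>. pmf \<mu> \<xi> * jump_rate \<sigma> N \<epsilon> \<gamma> rL rR \<xi> \<eta>) UNIV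
          = pmf \<mu> \<eta> * exit_rate \<sigma> N \<epsilon> \<gamma> rL rR \<eta>)"

definition alpha1 :: "real \<Rightarrow> real \<Rightarrow> real" where
  "alpha1 \<epsilon> \<gamma> = 1 + \<gamma>/2 * (1 + 1/\<epsilon>) - sqrt ((1 + \<gamma>/2 * (1 + 1/\<epsilon>))^2 - 1)"
definition alpha2 :: "real \<Rightarrow> real \<Rightarrow> real" where
  "alpha2 \<epsilon> \<gamma> = 1 + \<gamma>/2 * (1 + 1/\<epsilon>) + sqrt ((1 + \<gamma>/2 * (1 + 1/\<epsilon>))^2 - 1)"

text \<open>The matrix M_epsilon; M $ r $ c is the entry in row r, column c (indices 1..4).\<close>
definition Mmat :: "real \<Rightarrow> real \<Rightarrow> nat \<Rightarrow> real^4^4" where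
  "Mmat \<epsilon> \<gamma> N = (let a1 = alpha1 \<epsilon> \<gamma>; a2 = alpha2 \<epsilon> \<gamma> in
     vector [
       vector [0, 1, \<epsilon>, \<epsilon>],
       vector [1 - \<epsilon>, 1, (\<epsilon> - 1) * a1 - \<epsilon>, (\<epsilon> - 1) * a2 - \<epsilon>],
       vector [real N + 1, 1, \<epsilon> * a1 ^ (N+1), \<epsilon> * a2 ^ (N+1)],
       vector [real N + \<epsilon>, 1, - (a1 ^ N * (\<epsilon> * a1 + 1 - \<epsilon>)), - (a2 ^ N * (\<epsilon> * a2 + 1 - \<epsilon>))]])"

definition cvec :: "real \<Rightarrow> real \<Rightarrow> nat \<Rightarrow> 4 \<Rightarrow> real^4" where
  "cvec \<epsilon> \<gamma> N k = matrix_inv (Mmat \<epsilon> \<gamma> N) $ k"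

end

theory Submission
  imports Defs
begin

definition Psi :: "nat \<Rightarrow> (nat \<Rightarrow> nat \<Rightarrow> real) \<Rightarrow> cfg \<Rightarrow> real" where
  "Psi N v \<eta> = (\<Sum>x\<in>{1..N}. v 0 x * real (\<eta> 0 x)) + (\<Sum>x\<in>{1..N}. v 1 x * real (\<eta> 1 x))"

definition Lop :: "(cfg \<times> real) list \<Rightarrow> (cfg \<Rightarrow> real) \<Rightarrow> cfg \<Rightarrow> real" where
  "Lop L g \<xi> = sum_list (map (\<lambda>p. snd p * (g (fst p) - g \<xi>)) L)"

lemma slc: "sum_list (concat xs) = sum_list (map sum_list (xs::real list list))"
  by (induction xs) auto

lemma Lop_expand:
  fixes rL rR :: "nat \<Rightarrow> real"
  shows "Lop (transitions \<sigma> N \<epsilon> \<gamma> rL rR \<xi>) g \<xi> =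
 (\<Sum>x\<in>{1..<N}. real (\<xi> 0 x) * (1 + of_int \<sigma> * real (\<xi> 0 (x+1))) * (g (move_p \<xi> 0 x 0 (x+1)) - g \<xi>)
     + real (\<xi> 0 (x+1)) * (1 + of_int \<sigma> * real (\<xi> 0 x)) * (g (move_p \<xi> 0 (x+1) 0 x) - g \<xi>))
 + (\<Sum>x\<in>{1..<N}. \<epsilon> * real (\<xi> 1 x) * (1 + of_int \<sigma> * real (\<xi> 1 (x+1))) * (g (move_p \<xi> 1 x 1 (x+1)) - g \<xi>)
     + \<epsilon> * real (\<xi> 1 (x+1)) * (1 + of_int \<sigma> * real (\<xi> 1 x)) * (g (move_p \<xi> 1 (x+1) 1 x) - g \<xi>))
 + (\<Sum>x\<in>{1..N}. \<gamma> * real (\<xi> 0 x) * (1 + of_int \<sigma> * real (\<xi> 1 x)) * (g (move_p \<xi> 0 x 1 x) - g \<xi>))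
 + (\<Sum>x\<in>{1..N}. \<gamma> * real (\<xi> 1 x) * (1 + of_int \<sigma> * real (\<xi> 0 x)) * (g (move_p \<xi> 1 x 0 x) - g \<xi>))
 + (real (\<xi> 0 1) * (1 + of_int \<sigma> * rL 0) * (g (rem_p \<xi> 0 1) - g \<xi>)
   + rL 0 * (1 + of_int \<sigma> * real (\<xi> 0 1)) * (g (add_p \<xi> 0 1) - g \<xi>)
   + real (\<xi> 0 N) * (1 + of_int \<sigma> * rR 0) * (g (rem_p \<xi> 0 N) - g \<xi>)
   + rR 0 * (1 + of_int \<sigma> * real (\<xi> 0 N)) * (g (add_p \<xi> 0 N) - g \<xi>))
 + (real (\<xi> 1 1) * (1 + of_int \<sigma> * rL 1) * (g (rem_p \<xi> 1 1) - g \<xi>)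
   + rL 1 * (1 + of_int \<sigma> * real (\<xi> 1 1)) * (g (add_p \<xi> 1 1) - g \<xi>)
   + real (\<xi> 1 N) * (1 + of_int \<sigma> * rR 1) * (g (rem_p \<xi> 1 N) - g \<xi>)
   + rR 1 * (1 + of_int \<sigma> * real (\<xi> 1 N)) * (g (add_p \<xi> 1 N) - g \<xi>))"
proof -
  have e1: "\<And>f::nat\<Rightarrow>real. sum_list (map f [Suc 0..<N]) = sum f {1..<N}"
    by (simp add: sum_set_upt_conv_sum_list_nat[symmetric])
  have e2: "\<And>f::nat\<Rightarrow>real. sum_list (map f [Suc 0..<Suc N]) = sum f {1..N}"
    by (metis atLeastLessThanSuc_atLeastAtMost One_nat_def set_upt sum_set_upt_conv_sum_list_nat)
  show ?thesis
    unfolding Lop_def transitions_def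
    by (simp del: upt_Suc add: map_concat slc comp_def e1 e2 sum.distrib algebra_simps)
qed

lemma Psi_upd:
  assumes "i \<le> 1" "1 \<le> x" "x \<le> N"
  shows "Psi N v (\<eta>(i := (\<eta> i)(x := k))) = Psi N v \<eta> + v i x * (real k - real (\<eta> i x))"
proof -
  have gen: "\<And>(f::nat\<Rightarrow>nat) w. (\<Sum>y\<in>{1..N}. w y * real ((f(x := k)) y)) = (\<Sum>y\<in>{1..N}. w y * real (f y)) + w x * (real k - real (f x))"
  proof -
    fix f :: "nat \<Rightarrow> nat" and w :: "nat \<Rightarrow> real"
    have xin: "x \<in> {1..N}" using assms by auto
    have "(\<Sum>y\<in>{1..N}. w y * real ((f(x := k)) y)) = (\<Sum>y\<in>{1..N}. w y * real (f y) + (if y = x then w x * (real k - real (f x)) else 0))"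
      by (rule sum.cong) (auto simp: algebra_simps)
    also have "\<dots> = (\<Sum>y\<in>{1..N}. w y * real (f y)) + w x * (real k - real (f x))"
      using xin by (simp add: sum.distrib)
    finally show "(\<Sum>y\<in>{1..N}. w y * real ((f(x := k)) y)) = (\<Sum>y\<in>{1..N}. w y * real (f y)) + w x * (real k - real (f x))" .
  qed
  show ?thesis
  proof (cases "i = 0")
    case True
    then show ?thesis unfolding Psi_def using gen[where f="\<eta> 0" and w="v 0"] by simp
  next
    case False
    then have "i = 1" using assms by auto
    then show ?thesis unfolding Psi_def using gen[where f="\<eta> 1" and w="v 1"] by simp
  qed
qed

lemma Psi_add:
  assumes "i \<le> 1" "1 \<le> x" "x \<le> N"
  shows "Psi N v (add_p \<eta> i x) = Psi N v \<eta> + v i x"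
  unfolding add_p_def using Psi_upd[OF assms] by simp

lemma Psi_rem:
  assumes "i \<le> 1" "1 \<le> x" "x \<le> N"
  shows "Psi N v (rem_p \<eta> i x) = Psi N v \<eta> - (if \<eta> i x = 0 then 0 else v i x)"
  unfolding rem_p_def using Psi_upd[OF assms] by (simp add: of_nat_diff)

lemma Psi_move:
  assumes "i \<le> 1" "1 \<le> x" "x \<le> N" "j \<le> 1" "1 \<le> y" "y \<le> N"
  shows "Psi N v (move_p \<eta> i x j y) = Psi N v \<eta> - (if \<eta> i x = 0 then 0 else v i x) + v j y"
  unfolding move_p_def using Psi_add[OF assms(4-6)] Psi_rem[OF assms(1-3)] by simp

lemma move_term:
  assumes "i \<le> 1" "1 \<le> x" "x \<le> N" "j \<le> 1" "1 \<le> y" "y \<le> N"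
  shows "real (\<eta> i x) * A * (Psi N v (move_p \<eta> i x j y) - Psi N v \<eta>) = real (\<eta> i x) * A * (v j y - v i x)"
  using Psi_move[OF assms, of v \<eta>] by (cases "\<eta> i x = 0") auto

lemma rem_term:
  assumes "i \<le> 1" "1 \<le> x" "x \<le> N"
  shows "real (\<eta> i x) * A * (Psi N v (rem_p \<eta> i x) - Psi N v \<eta>) = - real (\<eta> i x) * A * v i x"
  using Psi_rem[OF assms, of v \<eta>] by (cases "\<eta> i x = 0") auto

lemma pair_term:
  assumes "i \<le> 1" "1 \<le> x" "x \<le> N" "1 \<le> y" "y \<le> N"
  shows "real (\<eta> i x) * (1 + s * real (\<eta> i y)) * (Psi N v (move_p \<eta> i x i y) - Psi N v \<eta>)
       + real (\<eta> i y) * (1 + s * real (\<eta> i x)) * (Psi N v (move_p \<eta> i y i x) - Psi N v \<eta>)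
       = (real (\<eta> i x) - real (\<eta> i y)) * (v i y - v i x)"
  using move_term[OF assms(1-3) assms(1,4,5), of \<eta> "1 + s * real (\<eta> i y)" v]
        move_term[OF assms(1,4,5) assms(1-3), of \<eta> "1 + s * real (\<eta> i x)" v]
  by (simp add: algebra_simps)

lemma pair_term_eps:
  assumes "i \<le> 1" "1 \<le> x" "x \<le> N" "1 \<le> y" "y \<le> N"
  shows "e * real (\<eta> i x) * (1 + s * real (\<eta> i y)) * (Psi N v (move_p \<eta> i x i y) - Psi N v \<eta>)
       + e * real (\<eta> i y) * (1 + s * real (\<eta> i x)) * (Psi N v (move_p \<eta> i y i x) - Psi N v \<eta>)
       = e * ((real (\<eta> i x) - real (\<eta> i y)) * (v i y - v i x))"
proof -
  have "e * (real (\<eta> i x) * (1 + s * real (\<eta> i y)) * (Psi N v (move_p \<eta> i x i y) - Psi N v \<eta>)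
       + real (\<eta> i y) * (1 + s * real (\<eta> i x)) * (Psi N v (move_p \<eta> i y i x) - Psi N v \<eta>))
       = e * ((real (\<eta> i x) - real (\<eta> i y)) * (v i y - v i x))"
    using pair_term[OF assms, of \<eta> s v] by simp
  then show ?thesis by (simp add: algebra_simps)
qed

lemma switch_term:
  assumes "1 \<le> x" "x \<le> N"
  shows "g * real (\<eta> 0 x) * (1 + s * real (\<eta> 1 x)) * (Psi N v (move_p \<eta> 0 x 1 x) - Psi N v \<eta>)
       + g * real (\<eta> 1 x) * (1 + s * real (\<eta> 0 x)) * (Psi N v (move_p \<eta> 1 x 0 x) - Psi N v \<eta>)
       = g * ((real (\<eta> 0 x) - real (\<eta> 1 x)) * (v 1 x - v 0 x))"
  using move_term[of 0 x N 1 x \<eta> "g * (1 + s * real (\<eta> 1 x))" v]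
        move_term[of 1 x N 0 x \<eta> "g * (1 + s * real (\<eta> 0 x))" v] assms
  by (simp add: algebra_simps)

lemma bd_term:
  assumes "i \<le> 1" "1 \<le> x" "x \<le> N"
  shows "real (\<eta> i x) * (1 + s * r) * (Psi N v (rem_p \<eta> i x) - Psi N v \<eta>)
    + r * (1 + s * real (\<eta> i x)) * (Psi N v (add_p \<eta> i x) - Psi N v \<eta>) = (r - real (\<eta> i x)) * v i x"
  using rem_term[OF assms, of \<eta> "1 + s * r" v] Psi_add[OF assms, of v \<eta>] by (simp add: algebra_simps)

definition LinF :: "real \<Rightarrow> real \<Rightarrow> nat \<Rightarrow> real \<Rightarrow> real \<Rightarrow> real \<Rightarrow> real \<Rightarrow> (nat\<Rightarrow>nat\<Rightarrow>real) \<Rightarrow> (nat\<Rightarrow>nat\<Rightarrow>real) \<Rightarrow> real" where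
"LinF \<epsilon> \<gamma> N a b c d r v =
   (\<Sum>x\<in>{1..<N}. (r 0 x - r 0 (x+1)) * (v 0 (x+1) - v 0 x))
 + \<epsilon> * (\<Sum>x\<in>{1..<N}. (r 1 x - r 1 (x+1)) * (v 1 (x+1) - v 1 x))
 + \<gamma> * (\<Sum>x\<in>{1..N}. (r 0 x - r 1 x) * (v 1 x - v 0 x))
 + ((a - r 0 1) * v 0 1 + (b - r 1 1) * v 1 1 + (c - r 0 N) * v 0 N + (d - r 1 N) * v 1 N)"

lemma LPsi:
  fixes rL rR :: "nat \<Rightarrow> real"
  assumes N: "1 \<le> N"
  shows "Lop (transitions \<sigma> N \<epsilon> \<gamma> rL rR \<xi>) (Psi N v) \<xi> =
    LinF \<epsilon> \<gamma> N (rL 0) (rL 1) (rR 0) (rR 1) (\<lambda>i x. real (\<xi> i x)) v"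
proof -
  let ?s = "real_of_int \<sigma>"
  have sw: "(\<Sum>x\<in>{1..N}. \<gamma> * real (\<xi> 0 x) * (1 + ?s * real (\<xi> 1 x)) * (Psi N v (move_p \<xi> 0 x 1 x) - Psi N v \<xi>))
    + (\<Sum>x\<in>{1..N}. \<gamma> * real (\<xi> 1 x) * (1 + ?s * real (\<xi> 0 x)) * (Psi N v (move_p \<xi> 1 x 0 x) - Psi N v \<xi>))
    = \<gamma> * (\<Sum>x\<in>{1..N}. (real (\<xi> 0 x) - real (\<xi> 1 x)) * (v 1 x - v 0 x))"
    unfolding sum.distrib[symmetric] sum_distrib_left
    by (rule sum.cong[OF refl]) (subst switch_term, auto)
  have b0: "(\<Sum>x\<in>{1..<N}. real (\<xi> 0 x) * (1 + ?s * real (\<xi> 0 (x+1))) * (Psi N v (move_p \<xi> 0 x 0 (x+1)) - Psi N v \<xi>)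
     + real (\<xi> 0 (x+1)) * (1 + ?s * real (\<xi> 0 x)) * (Psi N v (move_p \<xi> 0 (x+1) 0 x) - Psi N v \<xi>))
     = (\<Sum>x\<in>{1..<N}. (real (\<xi> 0 x) - real (\<xi> 0 (x+1))) * (v 0 (x+1) - v 0 x))"
    by (rule sum.cong[OF refl]) (subst pair_term, auto)
  have b1: "(\<Sum>x\<in>{1..<N}. \<epsilon> * real (\<xi> 1 x) * (1 + ?s * real (\<xi> 1 (x+1))) * (Psi N v (move_p \<xi> 1 x 1 (x+1)) - Psi N v \<xi>)
     + \<epsilon> * real (\<xi> 1 (x+1)) * (1 + ?s * real (\<xi> 1 x)) * (Psi N v (move_p \<xi> 1 (x+1) 1 x) - Psi N v \<xi>))
     = \<epsilon> * (\<Sum>x\<in>{1..<N}. (real (\<xi> 1 x) - real (\<xi> 1 (x+1))) * (v 1 (x+1) - v 1 x))"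
    unfolding sum_distrib_left
    by (rule sum.cong[OF refl]) (subst pair_term_eps, auto)
  have bd: "\<And>i r x. i \<le> 1 \<Longrightarrow> 1 \<le> x \<Longrightarrow> x \<le> N \<Longrightarrow> real (\<xi> i x) * (1 + ?s * r) * (Psi N v (rem_p \<xi> i x) - Psi N v \<xi>)
    + r * (1 + ?s * real (\<xi> i x)) * (Psi N v (add_p \<xi> i x) - Psi N v \<xi>) = (r - real (\<xi> i x)) * v i x"
    by (rule bd_term)
  show ?thesis
    unfolding Lop_expand b0 b1 LinF_def
    using sw bd[of 0 1 "rL 0"] bd[of 0 N "rR 0"] bd[of 1 1 "rL 1"] bd[of 1 N "rR 1"] N
    by (simp add: algebra_simps)
qed


abbreviation nn :: "nat \<Rightarrow> cfg \<Rightarrow> real" where "nn N \<xi> \<equiv> Psi N (\<lambda>_ _. 1) \<xi>"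

lemma Psi_nonneg: "(\<And>i x. i \<le> 1 \<Longrightarrow> 1 \<le> x \<Longrightarrow> x \<le> N \<Longrightarrow> 0 \<le> v i x) \<Longrightarrow> 0 \<le> Psi N v \<eta>"
  unfolding Psi_def by (intro add_nonneg_nonneg sum_nonneg) auto

lemma coord_le_nn:
  assumes "i \<le> 1" "1 \<le> x" "x \<le> N"
  shows "real (\<eta> i x) \<le> nn N \<eta>"
proof -
  have xin: "x \<in> {1..N}" using assms by auto
  have "real (\<eta> 0 x) \<le> (\<Sum>y\<in>{1..N}. 1 * real (\<eta> 0 y))"
    using member_le_sum[OF xin, of "\<lambda>y. 1 * real (\<eta> 0 y)"] by simp
  moreover have "real (\<eta> 1 x) \<le> (\<Sum>y\<in>{1..N}. 1 * real (\<eta> 1 y))"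
    using member_le_sum[OF xin, of "\<lambda>y. 1 * real (\<eta> 1 y)"] by simp
  moreover have "0 \<le> (\<Sum>y\<in>{1..N}. 1 * real (\<eta> 0 y))" "0 \<le> (\<Sum>y\<in>{1..N}. 1 * real (\<eta> 1 y))"
    by (auto intro: sum_nonneg)
  ultimately have h: "real (\<eta> 0 x) \<le> nn N \<eta>" "real (\<eta> 1 x) \<le> nn N \<eta>" unfolding Psi_def by linarith+
  have "i = 0 \<or> i = 1" using assms by auto
  then show ?thesis using h by auto
qed

lemma Psi_mono_v:
  assumes "\<And>i x. i \<le> 1 \<Longrightarrow> 1 \<le> x \<Longrightarrow> x \<le> N \<Longrightarrow> v i x \<le> w i x"
  shows "Psi N v \<eta> \<le> Psi N w \<eta>"
  unfolding Psi_def using assms by (intro add_mono sum_mono mult_right_mono) auto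

lemma valid_coord_le_nn:
  assumes "valid_cfg \<sigma> N \<eta>"
  shows "real (\<eta> i x) \<le> nn N \<eta>"
proof (cases "i \<le> 1 \<and> 1 \<le> x \<and> x \<le> N")
  case True then show ?thesis using coord_le_nn by auto
next
  case False
  then have "\<eta> i x = 0" using assms unfolding valid_cfg_def by auto
  then show ?thesis by (simp add: Psi_nonneg)
qed

lemma fin_valid: "finite {\<xi>. valid_cfg \<sigma> N \<xi> \<and> (\<forall>i x. \<xi> i x \<le> m)}"
proof -
  let ?S = "{0,1::nat} \<times> {1..N}"
  let ?A = "{\<xi>. valid_cfg \<sigma> N \<xi> \<and> (\<forall>i x. \<xi> i x \<le> m)}"
  let ?f = "\<lambda>\<xi>::cfg. restrict (\<lambda>p. \<xi> (fst p) (snd p)) ?S"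
  have inj: "inj_on ?f ?A"
  proof (rule inj_onI)
    fix \<xi>1 \<xi>2 assume h: "\<xi>1 \<in> ?A" "\<xi>2 \<in> ?A" "?f \<xi>1 = ?f \<xi>2"
    show "\<xi>1 = \<xi>2"
    proof (intro ext)
      fix i x
      show "\<xi>1 i x = \<xi>2 i x"
      proof (cases "(i,x) \<in> ?S")
        case True
        then show ?thesis using fun_cong[OF h(3), of "(i,x)"] by simp
      next
        case False
        then show ?thesis using h(1,2) unfolding valid_cfg_def by auto
      qed
    qed
  qed
  have "?f ` ?A \<subseteq> PiE ?S (\<lambda>_. {0..m})"
    by (rule image_subsetI) (auto simp: restrict_PiE_iff)
  moreover have "finite (PiE ?S (\<lambda>_. {0..m}))" by (intro finite_PiE) auto
  ultimately have "finite (?f ` ?A)" by (rule finite_subset)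
  then show ?thesis using finite_imageD[OF _ inj] by blast
qed

lemma fin_valid_nn: "finite {\<xi>. valid_cfg \<sigma> N \<xi> \<and> nn N \<xi> \<le> M}"
proof -
  have "{\<xi>. valid_cfg \<sigma> N \<xi> \<and> nn N \<xi> \<le> M} \<subseteq> {\<xi>. valid_cfg \<sigma> N \<xi> \<and> (\<forall>i x. \<xi> i x \<le> nat \<lceil>M\<rceil>)}"
  proof safe
    fix \<xi> i x assume h: "valid_cfg \<sigma> N \<xi>" "nn N \<xi> \<le> M"
    have "real (\<xi> i x) \<le> M" using valid_coord_le_nn[OF h(1), of i x] h(2) by linarith
    then show "\<xi> i x \<le> nat \<lceil>M\<rceil>" by linarith
  qed
  then show ?thesis using fin_valid finite_subset by blast
qed

lemma sum_list_bound:
  fixes f :: "'a \<Rightarrow> real"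
  assumes "\<And>p. p \<in> set L \<Longrightarrow> f p \<le> B"
  shows "sum_list (map f L) \<le> real (length L) * B"
proof -
  have "sum_list (map f L) \<le> sum_list (map (\<lambda>_. B) L)" by (rule sum_list_mono) (use assms in auto)
  then show ?thesis by (simp add: sum_list_triv)
qed

lemma sum_list_T:
  fixes h :: "cfg \<Rightarrow> real"
  assumes "finite T" "\<And>p. p \<in> set L \<Longrightarrow> h (fst p) \<noteq> 0 \<Longrightarrow> fst p \<in> T"
  shows "sum_list (map (\<lambda>p. snd p * h (fst p)) L) = (\<Sum>\<eta>\<in>T. h \<eta> * sum_list (map snd (filter (\<lambda>p. fst p = \<eta>) L)))"
  using assms(2)
proof (induction L)
  case Nil then show ?case by simp
next
  case (Cons p L)
  have IH: "sum_list (map (\<lambda>p. snd p * h (fst p)) L) = (\<Sum>\<eta>\<in>T. h \<eta> * sum_list (map snd (filter (\<lambda>p. fst p = \<eta>) L)))"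
    using Cons by auto
  have "(\<Sum>\<eta>\<in>T. h \<eta> * sum_list (map snd (filter (\<lambda>q. fst q = \<eta>) (p # L))))
      = (\<Sum>\<eta>\<in>T. h \<eta> * sum_list (map snd (filter (\<lambda>q. fst q = \<eta>) L)) + (if \<eta> = fst p then h \<eta> * snd p else 0))"
    by (rule sum.cong) (auto simp: algebra_simps)
  also have "\<dots> = (\<Sum>\<eta>\<in>T. h \<eta> * sum_list (map snd (filter (\<lambda>q. fst q = \<eta>) L))) + (if fst p \<in> T then h (fst p) * snd p else 0)"
    using assms(1) by (simp add: sum.distrib)
  also have "\<dots> = sum_list (map (\<lambda>p. snd p * h (fst p)) L) + snd p * h (fst p)"
    using IH Cons.prems[of p] by auto
  finally show ?case by simp
qed


locale sys =
  fixes \<sigma> :: int and N :: nat and \<epsilon> \<gamma> a b c d :: real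
  assumes sig: "\<sigma> \<in> {-1, 0, 1}"
    and eps0: "0 < \<epsilon>" and eps1: "\<epsilon> \<le> 1" and gam: "0 < \<gamma>" and N2: "2 \<le> N"
    and a0: "0 \<le> a" and b0: "0 \<le> b" and c0: "0 \<le> c" and d0: "0 \<le> d"
    and rho1: "\<sigma> = -1 \<longrightarrow> a \<le> 1 \<and> b \<le> 1 \<and> c \<le> 1 \<and> d \<le> 1"
begin

abbreviation TR :: "cfg \<Rightarrow> (cfg \<times> real) list" where
  "TR \<xi> \<equiv> transitions \<sigma> N \<epsilon> \<gamma> (\<lambda>i. if i = 0 then a else b) (\<lambda>i. if i = 0 then c else d) \<xi>"

abbreviation valid :: "cfg \<Rightarrow> bool" where "valid \<xi> \<equiv> valid_cfg \<sigma> N \<xi>"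

lemma TR_cases:
  assumes "p \<in> set (TR \<xi>)"
  obtains (move) i x j y s where "i \<le> 1" "1 \<le> x" "x \<le> N" "j \<le> 1" "1 \<le> y" "y \<le> N" "(i,x) \<noteq> (j,y)"
      "p = (move_p \<xi> i x j y, s * real (\<xi> i x) * (1 + of_int \<sigma> * real (\<xi> j y)))" "0 \<le> s" "s \<le> max 1 \<gamma>"
  | (rem) i x r where "i \<le> 1" "1 \<le> x" "x \<le> N" "p = (rem_p \<xi> i x, real (\<xi> i x) * (1 + of_int \<sigma> * r))"
       "0 \<le> r" "r \<le> a + b + c + d" "\<sigma> = -1 \<longrightarrow> r \<le> 1"
  | (add) i x r where "i \<le> 1" "1 \<le> x" "x \<le> N" "p = (add_p \<xi> i x, r * (1 + of_int \<sigma> * real (\<xi> i x)))"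
       "0 \<le> r" "r \<le> a + b + c + d" "\<sigma> = -1 \<longrightarrow> r \<le> 1"
proof -
  have N1: "1 \<le> N" using N2 by simp
  have icm: "\<And>(f::nat \<Rightarrow> (cfg \<times> real) list) xs. p \<in> set (concat (map f xs)) \<longleftrightarrow> (\<exists>x\<in>set xs. p \<in> set (f x))" by auto
  have i01: "\<And>i::nat. i \<in> set [0,1] \<Longrightarrow> i \<le> 1 \<and> \<epsilon>^i \<le> max 1 \<gamma> \<and> 0 \<le> \<epsilon>^i" using eps0 eps1 by auto
  have "p \<in> set (concat (map (\<lambda>i. concat (map (\<lambda>x.
        [(move_p \<xi> i x i (x+1), \<epsilon>^i * real (\<xi> i x) * (1 + of_int \<sigma> * real (\<xi> i (x+1)))),
         (move_p \<xi> i (x+1) i x, \<epsilon>^i * real (\<xi> i (x+1)) * (1 + of_int \<sigma> * real (\<xi> i x)))])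
       [1..<N])) [0,1]))
   \<or> p \<in> set (concat (map (\<lambda>i. map (\<lambda>x.
        (move_p \<xi> i x (1-i) x, \<gamma> * real (\<xi> i x) * (1 + of_int \<sigma> * real (\<xi> (1-i) x))))
       [1..<N+1]) [0,1]))
   \<or> p \<in> set (concat (map (\<lambda>i.
        [(rem_p \<xi> i 1, real (\<xi> i 1) * (1 + of_int \<sigma> * (if i = 0 then a else b))),
         (add_p \<xi> i 1, (if i = 0 then a else b) * (1 + of_int \<sigma> * real (\<xi> i 1))),
         (rem_p \<xi> i N, real (\<xi> i N) * (1 + of_int \<sigma> * (if i = 0 then c else d))),
         (add_p \<xi> i N, (if i = 0 then c else d) * (1 + of_int \<sigma> * real (\<xi> i N)))]) [0,1]))"
    using assms unfolding transitions_def set_append Un_iff by simp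
  then consider (B) "p \<in> set (concat (map (\<lambda>i. concat (map (\<lambda>x.
        [(move_p \<xi> i x i (x+1), \<epsilon>^i * real (\<xi> i x) * (1 + of_int \<sigma> * real (\<xi> i (x+1)))),
         (move_p \<xi> i (x+1) i x, \<epsilon>^i * real (\<xi> i (x+1)) * (1 + of_int \<sigma> * real (\<xi> i x)))])
       [1..<N])) [0,1]))"
   | (S) "p \<in> set (concat (map (\<lambda>i. map (\<lambda>x.
        (move_p \<xi> i x (1-i) x, \<gamma> * real (\<xi> i x) * (1 + of_int \<sigma> * real (\<xi> (1-i) x))))
       [1..<N+1]) [0,1]))"
   | (D) "p \<in> set (concat (map (\<lambda>i.
        [(rem_p \<xi> i 1, real (\<xi> i 1) * (1 + of_int \<sigma> * (if i = 0 then a else b))),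
         (add_p \<xi> i 1, (if i = 0 then a else b) * (1 + of_int \<sigma> * real (\<xi> i 1))),
         (rem_p \<xi> i N, real (\<xi> i N) * (1 + of_int \<sigma> * (if i = 0 then c else d))),
         (add_p \<xi> i N, (if i = 0 then c else d) * (1 + of_int \<sigma> * real (\<xi> i N)))]) [0,1]))"
    by blast
  then show ?thesis
  proof cases
    case B
    then obtain i x where ix: "i \<in> set [0,1]" "x \<in> set [1..<N]" and
      p: "p \<in> set [(move_p \<xi> i x i (x+1), \<epsilon>^i * real (\<xi> i x) * (1 + of_int \<sigma> * real (\<xi> i (x+1)))),
         (move_p \<xi> i (x+1) i x, \<epsilon>^i * real (\<xi> i (x+1)) * (1 + of_int \<sigma> * real (\<xi> i x)))]"
      unfolding icm by blast
    have xr: "1 \<le> x" "x + 1 \<le> N" using ix by auto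
    from p have "p = (move_p \<xi> i x i (x+1), \<epsilon>^i * real (\<xi> i x) * (1 + of_int \<sigma> * real (\<xi> i (x+1))))
       \<or> p = (move_p \<xi> i (x+1) i x, \<epsilon>^i * real (\<xi> i (x+1)) * (1 + of_int \<sigma> * real (\<xi> i x)))"
      by (simp only: set_simps insert_iff empty_iff) blast
    then show ?thesis
    proof
      assume h: "p = (move_p \<xi> i x i (x+1), \<epsilon>^i * real (\<xi> i x) * (1 + of_int \<sigma> * real (\<xi> i (x+1))))"
      show ?thesis by (rule move[OF _ _ _ _ _ _ _ h]) (use i01[OF ix(1)] xr in auto)
    next
      assume h: "p = (move_p \<xi> i (x+1) i x, \<epsilon>^i * real (\<xi> i (x+1)) * (1 + of_int \<sigma> * real (\<xi> i x)))"
      show ?thesis by (rule move[OF _ _ _ _ _ _ _ h]) (use i01[OF ix(1)] xr in auto)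
    qed
  next
    case S
    have ism: "\<And>(f::nat \<Rightarrow> cfg \<times> real) xs. p \<in> set (map f xs) \<longleftrightarrow> (\<exists>x\<in>set xs. p = f x)" by auto
    from S obtain i x where ix: "i \<in> set [0,1]" "x \<in> set [1..<N+1]" and
      h: "p = (move_p \<xi> i x (1-i) x, \<gamma> * real (\<xi> i x) * (1 + of_int \<sigma> * real (\<xi> (1-i) x)))"
      unfolding icm ism by blast
    have xr: "1 \<le> x" "x \<le> N" using ix by auto
    show ?thesis by (rule move[OF _ _ _ _ _ _ _ h]) (use ix xr gam in auto)
  next
    case D
    then obtain i where ix: "i \<in> set [0,1]" and
      p: "p \<in> set [(rem_p \<xi> i 1, real (\<xi> i 1) * (1 + of_int \<sigma> * (if i = 0 then a else b))),
         (add_p \<xi> i 1, (if i = 0 then a else b) * (1 + of_int \<sigma> * real (\<xi> i 1))),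
         (rem_p \<xi> i N, real (\<xi> i N) * (1 + of_int \<sigma> * (if i = 0 then c else d))),
         (add_p \<xi> i N, (if i = 0 then c else d) * (1 + of_int \<sigma> * real (\<xi> i N)))]"
      unfolding icm by blast
    have r1: "0 \<le> (if i = 0 then a else b)" "(if i = 0 then a else b) \<le> a + b + c + d"
         "\<sigma> = -1 \<longrightarrow> (if i = 0 then a else b) \<le> 1" using a0 b0 c0 d0 rho1 by auto
    have r2: "0 \<le> (if i = 0 then c else d)" "(if i = 0 then c else d) \<le> a + b + c + d"
         "\<sigma> = -1 \<longrightarrow> (if i = 0 then c else d) \<le> 1" using a0 b0 c0 d0 rho1 by auto
    have i1: "i \<le> 1" using ix by auto
    from p consider (h1) "p = (rem_p \<xi> i 1, real (\<xi> i 1) * (1 + of_int \<sigma> * (if i = 0 then a else b)))"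
      | (h2) "p = (add_p \<xi> i 1, (if i = 0 then a else b) * (1 + of_int \<sigma> * real (\<xi> i 1)))"
      | (h3) "p = (rem_p \<xi> i N, real (\<xi> i N) * (1 + of_int \<sigma> * (if i = 0 then c else d)))"
      | (h4) "p = (add_p \<xi> i N, (if i = 0 then c else d) * (1 + of_int \<sigma> * real (\<xi> i N)))"
      by (simp only: set_simps insert_iff empty_iff) blast
    then show ?thesis
    proof cases
      case h1 show ?thesis by (rule rem[OF i1 _ _ h1 r1]) (use N1 in auto)
    next
      case h2 show ?thesis by (rule add[OF i1 _ _ h2 r1]) (use N1 in auto)
    next
      case h3 show ?thesis by (rule rem[OF i1 _ _ h3 r2]) (use N1 in auto)
    next
      case h4 show ?thesis by (rule add[OF i1 _ _ h4 r2]) (use N1 in auto)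
    qed
  qed
qed


lemma sfac:
  fixes k :: real
  assumes "0 \<le> k" "\<sigma> = -1 \<longrightarrow> k \<le> 1"
  shows "0 \<le> 1 + of_int \<sigma> * k" "1 + of_int \<sigma> * k \<le> 1 + k"
proof -
  from sig have "\<sigma> = -1 \<or> \<sigma> = 0 \<or> \<sigma> = 1" by auto
  then show "0 \<le> 1 + of_int \<sigma> * k" "1 + of_int \<sigma> * k \<le> 1 + k"
    using assms by (elim disjE; simp; linarith)+
qed

lemma valid_le1: "valid \<xi> \<Longrightarrow> \<sigma> = -1 \<Longrightarrow> \<xi> i x \<le> 1"
  unfolding valid_cfg_def by auto

lemma valid_rem: "valid \<xi> \<Longrightarrow> valid (rem_p \<xi> i x)"
  unfolding valid_cfg_def rem_p_def by auto

lemma valid_add: "valid \<xi> \<Longrightarrow> i \<le> 1 \<Longrightarrow> 1 \<le> x \<Longrightarrow> x \<le> N \<Longrightarrow> (\<sigma> = -1 \<longrightarrow> \<xi> i x = 0) \<Longrightarrow> valid (add_p \<xi> i x)"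
  unfolding valid_cfg_def add_p_def by auto

lemma valid_move:
  assumes "valid \<xi>" "j \<le> 1" "1 \<le> y" "y \<le> N" "(i,x) \<noteq> (j,y)" "\<sigma> = -1 \<longrightarrow> \<xi> j y = 0"
  shows "valid (move_p \<xi> i x j y)"
proof -
  have "rem_p \<xi> i x j y = \<xi> j y" using assms(5) unfolding rem_p_def by auto
  then show ?thesis unfolding move_p_def using valid_add[OF valid_rem[OF assms(1)] assms(2-4)] assms(6) by simp
qed

lemma rate_nonneg:
  assumes "valid \<xi>" "p \<in> set (TR \<xi>)"
  shows "0 \<le> snd p"
  using assms(2)
proof (cases rule: TR_cases)
  case (move i x j y s)
  have "0 \<le> 1 + of_int \<sigma> * real (\<xi> j y)" using sfac[of "real (\<xi> j y)"] valid_le1[OF assms(1)] by auto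
  then show ?thesis using move by simp
next
  case (rem i x r)
  then show ?thesis using sfac[of r] by simp
next
  case (add i x r)
  have "0 \<le> 1 + of_int \<sigma> * real (\<xi> i x)" using sfac[of "real (\<xi> i x)"] valid_le1[OF assms(1)] by auto
  then show ?thesis using add by simp
qed

lemma target_valid:
  assumes "valid \<xi>" "p \<in> set (TR \<xi>)" "snd p \<noteq> 0"
  shows "valid (fst p)"
  using assms(2)
proof (cases rule: TR_cases)
  case (move i x j y s)
  have "\<sigma> = -1 \<longrightarrow> \<xi> j y = 0"
  proof
    assume sm: "\<sigma> = -1"
    have "\<xi> j y \<le> 1" using valid_le1[OF assms(1) sm] .
    moreover have "\<xi> j y \<noteq> 1" using assms(3) move sm by auto
    ultimately show "\<xi> j y = 0" by simp
  qed
  then show ?thesis using valid_move[OF assms(1) move(4-7)] move by simp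
next
  case (rem i x r)
  then show ?thesis using valid_rem[OF assms(1)] by simp
next
  case (add i x r)
  have "\<sigma> = -1 \<longrightarrow> \<xi> i x = 0"
  proof
    assume sm: "\<sigma> = -1"
    have "\<xi> i x \<le> 1" using valid_le1[OF assms(1) sm] .
    moreover have "\<xi> i x \<noteq> 1" using assms(3) add sm by auto
    ultimately show "\<xi> i x = 0" by simp
  qed
  then show ?thesis using valid_add[OF assms(1) add(1-3)] add by simp
qed

lemma Psi_jump:
  assumes "p \<in> set (TR \<xi>)" "\<And>i x. i \<le> 1 \<Longrightarrow> 1 \<le> x \<Longrightarrow> x \<le> N \<Longrightarrow> 0 \<le> v i x \<and> v i x \<le> V"
  shows "\<bar>Psi N v (fst p) - Psi N v \<xi>\<bar> \<le> V"
  using assms(1)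
proof (cases rule: TR_cases)
  case (move i x j y s)
  then show ?thesis using Psi_move[OF move(1-6), of v \<xi>] assms(2)[of i x] assms(2)[of j y] by auto
next
  case (rem i x r)
  then show ?thesis using Psi_rem[OF rem(1-3), of v \<xi>] assms(2)[of i x] by auto
next
  case (add i x r)
  then show ?thesis using Psi_add[OF add(1-3), of v \<xi>] assms(2)[of i x] by auto
qed

lemma nn_jump: "p \<in> set (TR \<xi>) \<Longrightarrow> nn N \<xi> \<le> nn N (fst p) + 1"
  using Psi_jump[of p \<xi> "\<lambda>_ _. 1" 1] by auto

lemma prod3: "0 \<le> (x::real) \<Longrightarrow> x \<le> X \<Longrightarrow> 0 \<le> y \<Longrightarrow> y \<le> Y \<Longrightarrow> 0 \<le> z \<Longrightarrow> z \<le> Z \<Longrightarrow> x * y * z \<le> X * Y * Z"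
  by (intro mult_mono) (auto intro: order_trans)

definition Bc :: real where "Bc = max 1 \<gamma> + a + b + c + d + 1"

lemma rate_bound:
  assumes "valid \<xi>" "p \<in> set (TR \<xi>)"
  shows "snd p \<le> Bc * (1 + nn N \<xi>)^2"
  using assms(2)
proof (cases rule: TR_cases)
  case (move i x j y s)
  let ?n = "nn N \<xi>"
  have n0: "0 \<le> ?n" by (simp add: Psi_nonneg)
  have "0 \<le> 1 + of_int \<sigma> * real (\<xi> j y)" "1 + of_int \<sigma> * real (\<xi> j y) \<le> 1 + real (\<xi> j y)"
    using sfac[of "real (\<xi> j y)"] valid_le1[OF assms(1)] by auto
  moreover have "real (\<xi> j y) \<le> ?n" "real (\<xi> i x) \<le> ?n" using valid_coord_le_nn[OF assms(1)] by auto
  ultimately have "s * real (\<xi> i x) * (1 + of_int \<sigma> * real (\<xi> j y)) \<le> Bc * (1 + ?n) * (1 + ?n)"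
    using move(9,10) n0 a0 b0 c0 d0 unfolding Bc_def by (intro prod3) auto
  then show ?thesis using move by (simp add: power2_eq_square)
next
  case (rem i x r)
  let ?n = "nn N \<xi>"
  have n0: "0 \<le> ?n" by (simp add: Psi_nonneg)
  have "0 \<le> 1 + of_int \<sigma> * r" "1 + of_int \<sigma> * r \<le> 1 + r" using sfac[of r] rem by auto
  moreover have "real (\<xi> i x) \<le> ?n" using valid_coord_le_nn[OF assms(1)] by auto
  ultimately have "(1 + of_int \<sigma> * r) * real (\<xi> i x) * 1 \<le> Bc * (1 + ?n) * (1 + ?n)"
    using rem n0 a0 b0 c0 d0 unfolding Bc_def by (intro prod3) auto
  then show ?thesis using rem by (simp add: power2_eq_square ac_simps)
next
  case (add i x r)
  let ?n = "nn N \<xi>"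
  have n0: "0 \<le> ?n" by (simp add: Psi_nonneg)
  have "0 \<le> 1 + of_int \<sigma> * real (\<xi> i x)" "1 + of_int \<sigma> * real (\<xi> i x) \<le> 1 + real (\<xi> i x)"
    using sfac[of "real (\<xi> i x)"] valid_le1[OF assms(1)] by auto
  moreover have "real (\<xi> i x) \<le> ?n" using valid_coord_le_nn[OF assms(1)] by auto
  ultimately have "r * (1 + of_int \<sigma> * real (\<xi> i x)) * 1 \<le> Bc * (1 + ?n) * (1 + ?n)"
    using add n0 a0 b0 c0 d0 unfolding Bc_def by (intro prod3) auto
  then show ?thesis using add by (simp add: power2_eq_square)
qed

definition LN :: nat where "LN = 6 * N + 4"

lemma length_TR: "length (TR \<xi>) = LN"
proof -
  have e: "\<And>f::nat\<Rightarrow>nat. sum_list (map f [Suc 0..<N]) = sum f {1..<N}"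
    by (simp add: sum_set_upt_conv_sum_list_nat[symmetric])
  show ?thesis using N2 unfolding transitions_def LN_def
    by (simp del: upt_Suc add: length_concat comp_def e)
qed

end


lemma Lop_split: "Lop L h \<xi> = sum_list (map (\<lambda>p. snd p * h (fst p)) L) - sum_list (map snd L) * h \<xi>"
  unfolding Lop_def by (induction L) (auto simp: algebra_simps)

locale stat = sys +
  fixes \<mu> :: "cfg pmf"
  assumes st: "stationary \<sigma> N \<epsilon> \<gamma> (\<lambda>i. if i = 0 then a else b) (\<lambda>i. if i = 0 then c else d) \<mu>"
begin

lemma supp_valid: "\<xi> \<in> set_pmf \<mu> \<Longrightarrow> valid \<xi>"
  using st unfolding stationary_def by auto

lemma balance: "valid \<eta> \<Longrightarrow> infsum (\<lambda>\<xi>. pmf \<mu> \<xi> * jump_rate \<sigma> N \<epsilon> \<gamma> (\<lambda>i. if i = 0 then a else b) (\<lambda>i. if i = 0 then c else d) \<xi> \<eta>) UNIV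
   = pmf \<mu> \<eta> * exit_rate \<sigma> N \<epsilon> \<gamma> (\<lambda>i. if i = 0 then a else b) (\<lambda>i. if i = 0 then c else d) \<eta>"
  using st unfolding stationary_def by auto

abbreviation JR where "JR \<xi> \<eta> \<equiv> jump_rate \<sigma> N \<epsilon> \<gamma> (\<lambda>i. if i = 0 then a else b) (\<lambda>i. if i = 0 then c else d) \<xi> \<eta>"
abbreviation ER where "ER \<eta> \<equiv> exit_rate \<sigma> N \<epsilon> \<gamma> (\<lambda>i. if i = 0 then a else b) (\<lambda>i. if i = 0 then c else d) \<eta>"

lemma S1:
  assumes h: "\<And>\<eta>. h \<eta> \<noteq> 0 \<Longrightarrow> valid \<eta> \<and> nn N \<eta> \<le> M"
  shows "measure_pmf.expectation \<mu> (\<lambda>\<xi>. Lop (TR \<xi>) h \<xi>) = 0"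
proof -
  define T where "T = {\<eta>. valid \<eta> \<and> nn N \<eta> \<le> M}"
  define F where "F = {\<eta>. valid \<eta> \<and> nn N \<eta> \<le> M + 1}"
  have finT: "finite T" unfolding T_def by (rule fin_valid_nn)
  have finF: "finite F" unfolding F_def by (rule fin_valid_nn)
  have TF: "T \<subseteq> F" unfolding T_def F_def by auto
  have hT: "\<And>\<eta>. \<eta> \<notin> T \<Longrightarrow> h \<eta> = 0" using h unfolding T_def by blast
  have zero_out: "Lop (TR \<xi>) h \<xi> = 0" if "\<xi> \<notin> F" "valid \<xi>" for \<xi>
  proof -
    have "h \<xi> = 0" using hT that TF by auto
    moreover have "\<And>p. p \<in> set (TR \<xi>) \<Longrightarrow> h (fst p) = 0"
    proof -
      fix p assume "p \<in> set (TR \<xi>)"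
      then have "nn N \<xi> \<le> nn N (fst p) + 1" by (rule nn_jump)
      then have "fst p \<notin> T" using that unfolding T_def F_def by auto
      then show "h (fst p) = 0" by (rule hT)
    qed
    ultimately have "map (\<lambda>p. snd p * (h (fst p) - h \<xi>)) (TR \<xi>) = map (\<lambda>_. 0) (TR \<xi>)"
      by (intro map_cong) auto
    then show ?thesis unfolding Lop_def by (simp only: sum_list_0)
  qed
  have E: "measure_pmf.expectation \<mu> (\<lambda>\<xi>. Lop (TR \<xi>) h \<xi>) = (\<Sum>\<xi>\<in>F. Lop (TR \<xi>) h \<xi> * pmf \<mu> \<xi>)"
    by (rule integral_measure_pmf_real[OF finF]) (use zero_out supp_valid in blast)
  have split: "Lop (TR \<xi>) h \<xi> = (\<Sum>\<eta>\<in>T. h \<eta> * JR \<xi> \<eta>) - ER \<xi> * h \<xi>" for \<xi>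
    unfolding Lop_split jump_rate_def exit_rate_def
    by (subst sum_list_T[OF finT]) (use hT in auto)
  have inner: "(\<Sum>\<xi>\<in>F. pmf \<mu> \<xi> * JR \<xi> \<eta>) = pmf \<mu> \<eta> * ER \<eta>" if "\<eta> \<in> T" for \<eta>
  proof -
    have "(\<Sum>\<xi>\<in>F. pmf \<mu> \<xi> * JR \<xi> \<eta>) = infsum (\<lambda>\<xi>. pmf \<mu> \<xi> * JR \<xi> \<eta>) F"
      by (simp add: finF)
    also have "\<dots> = infsum (\<lambda>\<xi>. pmf \<mu> \<xi> * JR \<xi> \<eta>) UNIV"
    proof (rule infsum_cong_neutral)
      fix \<xi> assume "\<xi> \<in> UNIV - F"
      show "pmf \<mu> \<xi> * JR \<xi> \<eta> = 0"
      proof (rule ccontr)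
        assume nz: "pmf \<mu> \<xi> * JR \<xi> \<eta> \<noteq> 0"
        then have "pmf \<mu> \<xi> \<noteq> 0" by auto
        then have "\<xi> \<in> set_pmf \<mu>" by (simp add: set_pmf_iff)
        then have v: "valid \<xi>" by (rule supp_valid)
        from nz have "JR \<xi> \<eta> \<noteq> 0" by auto
        then have "filter (\<lambda>p. fst p = \<eta>) (TR \<xi>) \<noteq> []" unfolding jump_rate_def by auto
        then obtain p where p: "p \<in> set (TR \<xi>)" "fst p = \<eta>"
          by (auto simp: filter_empty_conv)
        have "nn N \<xi> \<le> nn N \<eta> + 1" using nn_jump[OF p(1)] p(2) by simp
        then have "\<xi> \<in> F" using v that unfolding T_def F_def by auto
        then show False using \<open>\<xi> \<in> UNIV - F\<close> by auto
      qed
    qed auto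
    also have "\<dots> = pmf \<mu> \<eta> * ER \<eta>" using balance that unfolding T_def by auto
    finally show ?thesis .
  qed
  have "(\<Sum>\<xi>\<in>F. Lop (TR \<xi>) h \<xi> * pmf \<mu> \<xi>)
     = (\<Sum>\<xi>\<in>F. \<Sum>\<eta>\<in>T. h \<eta> * (pmf \<mu> \<xi> * JR \<xi> \<eta>)) - (\<Sum>\<xi>\<in>F. pmf \<mu> \<xi> * ER \<xi> * h \<xi>)"
    unfolding split by (simp add: sum_subtractf sum_distrib_left sum_distrib_right algebra_simps)
  also have "(\<Sum>\<xi>\<in>F. \<Sum>\<eta>\<in>T. h \<eta> * (pmf \<mu> \<xi> * JR \<xi> \<eta>)) = (\<Sum>\<eta>\<in>T. h \<eta> * (\<Sum>\<xi>\<in>F. pmf \<mu> \<xi> * JR \<xi> \<eta>))"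
    by (subst sum.swap) (simp add: sum_distrib_left)
  also have "\<dots> = (\<Sum>\<eta>\<in>T. h \<eta> * (pmf \<mu> \<eta> * ER \<eta>))"
    by (rule sum.cong) (auto simp: inner)
  also have "(\<Sum>\<xi>\<in>F. pmf \<mu> \<xi> * ER \<xi> * h \<xi>) = (\<Sum>\<xi>\<in>T. pmf \<mu> \<xi> * ER \<xi> * h \<xi>)"
    by (rule sum.mono_neutral_right[OF finF TF]) (use hT in auto)
  finally show ?thesis unfolding E by (simp add: algebra_simps)
qed

end


definition FK :: "real \<Rightarrow> real \<Rightarrow> real" where
  "FK K y = (if y \<le> K then y else if y \<le> 2*K then y - (y-K)^2/(2*K) else 3*K/2)"
definition thK :: "real \<Rightarrow> real \<Rightarrow> real" where
  "thK K y = (if y \<le> K then 1 else if y \<le> 2*K then (2*K - y)/K else 0)"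

lemma thK_bounds: "0 < K \<Longrightarrow> 0 \<le> thK K y \<and> thK K y \<le> 1"
  unfolding thK_def by (auto simp: field_simps)

lemma FK1: "y \<le> K \<Longrightarrow> FK K y = y" unfolding FK_def by simp
lemma FK2: "K < y \<Longrightarrow> y \<le> 2*K \<Longrightarrow> FK K y = y - (y-K)^2/(2*K)" unfolding FK_def by simp
lemma FK3: "2*K < y \<Longrightarrow> 0 < K \<Longrightarrow> FK K y = 3*K/2" unfolding FK_def by simp
lemma th1: "y \<le> K \<Longrightarrow> thK K y = 1" unfolding thK_def by simp
lemma th2: "K < y \<Longrightarrow> y \<le> 2*K \<Longrightarrow> thK K y = (2*K - y)/K" unfolding thK_def by simp
lemma th3: "2*K < y \<Longrightarrow> 0 < K \<Longrightarrow> thK K y = 0" unfolding thK_def by simp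

lemma gen_R:
  fixes K R P Q :: real
  assumes "0 < K" "R = - P / (2*K)" "0 \<le> P" "P \<le> Q"
  shows "- Q / (2*K) \<le> R \<and> R \<le> 0"
proof
  have "-Q/(2*K) \<le> -P/(2*K)" using assms by (intro divide_right_mono) auto
  then show "- Q / (2*K) \<le> R" using assms by simp
  have "-P/(2*K) \<le> 0" using assms by (intro divide_nonpos_pos) auto
  then show "R \<le> 0" using assms by simp
qed

lemma FK_taylor:
  assumes K: "0 < K"
  shows "-((y - x)^2) / (2*K) \<le> FK K y - FK K x - thK K x * (y - x) \<and> FK K y - FK K x - thK K x * (y - x) \<le> 0"
proof -
  let ?R = "FK K y - FK K x - thK K x * (y - x)"
  let ?Q = "(y - x)^2"
  have nn: "\<And>p q::real. 0 \<le> p \<Longrightarrow> 0 \<le> q \<Longrightarrow> 0 \<le> p * q" by simp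
  have K0: "K \<noteq> 0" using K by simp
  have fin: "?thesis" if e: "?R = - P / (2*K)" and p0: "0 \<le> P" and q: "?Q - P = S" and s0: "0 \<le> S" for P S
  proof -
    have "P \<le> ?Q" using q s0 by linarith
    then show ?thesis using gen_R[OF K e p0] by blast
  qed
  consider "x \<le> K" | "K < x" "x \<le> 2*K" | "2*K < x" by linarith
  note cx = this
  consider "y \<le> K" | "K < y" "y \<le> 2*K" | "2*K < y" by linarith
  note cy = this
  show ?thesis
  proof (cases rule: cx)
    case 1
    note x = this
    show ?thesis
    proof (cases rule: cy)
      case 1
      show ?thesis by (rule fin[of 0 ?Q]) (simp_all add: FK1 th1 x 1)
    next
      case 2
      have e: "?R = - ((y-K)^2) / (2*K)" using K0 by (simp add: FK1 FK2 th1 x 2, (simp add: field_simps)?)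
      have q: "?Q - (y-K)^2 = (K - x) * (2*y - x - K)" by algebra
      have "0 \<le> (K - x) * (2*y - x - K)" using x 2 by (intro nn) auto
      then show ?thesis using fin[OF e _ q] by simp
    next
      case 3
      have e: "?R = - (K * (2*y - 3*K)) / (2*K)" using K0 K by (simp add: FK1 FK3 th1 x 3, (simp add: field_simps)?)
      have q: "?Q - K * (2*y - 3*K) = (K - x) * (2*y - x - K) + (y - 2*K)^2" by algebra
      have "0 \<le> (K - x) * (2*y - x - K)" using x 3 K by (intro nn) auto
      moreover have "0 \<le> K * (2*y - 3*K)" using 3 K by (intro nn) auto
      moreover have "0 \<le> (y - 2*K)^2" by simp
      ultimately show ?thesis using fin[OF e _ q] by simp
    qed
  next
    case 2
    note x = this
    show ?thesis
    proof (cases rule: cy)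
      case 1
      have e: "?R = - ((x - K) * (x - 2*y + K)) / (2*K)" using K0 by (simp add: FK1 FK2 th2 x 1, (simp add: field_simps power2_eq_square)?)
      have q: "?Q - (x - K) * (x - 2*y + K) = (K - y)^2" by algebra
      have "0 \<le> (x - K) * (x - 2*y + K)" using x 1 by (intro nn) auto
      then show ?thesis using fin[OF e _ q] by simp
    next
      case 2
      have e: "?R = - ((y - x)^2) / (2*K)" using K0 by (simp add: FK2 th2 x 2, (simp add: field_simps power2_eq_square)?)
      show ?thesis by (rule fin[OF e _ _ order_refl]) simp_all
    next
      case 3
      have e: "?R = - ((2*K - x) * (2*y - x - 2*K)) / (2*K)" using K0 K by (simp add: FK2 FK3 th2 x 3, (simp add: field_simps power2_eq_square)?)
      have q: "?Q - (2*K - x) * (2*y - x - 2*K) = (y - 2*K)^2" by algebra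
      have "0 \<le> (2*K - x) * (2*y - x - 2*K)" using x 3 by (intro nn) auto
      then show ?thesis using fin[OF e _ q] by simp
    qed
  next
    case 3
    note x = this
    show ?thesis
    proof (cases rule: cy)
      case 1
      have e: "?R = - (K * (3*K - 2*y)) / (2*K)" using K0 K by (simp add: FK1 FK3 th3 x 1, (simp add: field_simps)?)
      have q: "?Q - K * (3*K - 2*y) = (x - 2*K) * (x + 2*K - 2*y) + (K - y)^2" by algebra
      have "0 \<le> (x - 2*K) * (x + 2*K - 2*y)" using x 1 K by (intro nn) auto
      moreover have "0 \<le> K * (3*K - 2*y)" using 1 K by (intro nn) auto
      moreover have "0 \<le> (K - y)^2" by simp
      ultimately show ?thesis using fin[OF e _ q] by simp
    next
      case 2
      have e: "?R = - ((2*K - y)^2) / (2*K)" using K0 K by (simp add: FK2 FK3 th3 x 2, (simp add: field_simps power2_eq_square)?)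
      have q: "?Q - (2*K - y)^2 = (x - 2*K) * (x + 2*K - 2*y)" by algebra
      have "0 \<le> (x - 2*K) * (x + 2*K - 2*y)" using x 2 K by (intro nn) auto
      then show ?thesis using fin[OF e _ q] by simp
    next
      case 3
      show ?thesis by (rule fin[of 0 ?Q]) (use K x 3 in \<open>simp_all add: FK3 th3\<close>)
    qed
  qed
qed


lemma sum_list_lbound:
  fixes f :: "'a \<Rightarrow> real"
  assumes "\<And>p. p \<in> set L \<Longrightarrow> B \<le> f p"
  shows "real (length L) * B \<le> sum_list (map f L)"
proof -
  have "sum_list (map (\<lambda>_. B) L) \<le> sum_list (map f L)" by (rule sum_list_mono) (use assms in auto)
  then show ?thesis by (simp add: sum_list_triv)
qed

lemma sl_lin: "sum_list (map (\<lambda>p. f p - t * g p) L) = sum_list (map f L) - (t::real) * sum_list (map g L)"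
  by (induction L) (auto simp: algebra_simps)

context stat
begin

definition vgood :: "(nat \<Rightarrow> nat \<Rightarrow> real) \<Rightarrow> real \<Rightarrow> bool" where
  "vgood v V \<longleftrightarrow> (\<forall>i x. i \<le> 1 \<longrightarrow> 1 \<le> x \<longrightarrow> x \<le> N \<longrightarrow> 1 \<le> v i x \<and> v i x \<le> V)"

definition hK :: "(nat \<Rightarrow> nat \<Rightarrow> real) \<Rightarrow> real \<Rightarrow> cfg \<Rightarrow> real" where
  "hK v K \<eta> = (if valid \<eta> then FK K (Psi N v \<eta>) - 3*K/2 else 0)"

abbreviation LF :: "cfg \<Rightarrow> (nat \<Rightarrow> nat \<Rightarrow> real) \<Rightarrow> real" where
  "LF \<xi> v \<equiv> LinF \<epsilon> \<gamma> N a b c d (\<lambda>i x. real (\<xi> i x)) v"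

lemma LPsi': "Lop (TR \<xi>) (Psi N v) \<xi> = LF \<xi> v"
  using LPsi[of N \<sigma> \<epsilon> \<gamma> "\<lambda>i. if i = 0 then a else b" "\<lambda>i. if i = 0 then c else d" \<xi> v] N2 by simp

lemma vgood_jump: assumes "vgood v V" "p \<in> set (TR \<xi>)" shows "\<bar>Psi N v (fst p) - Psi N v \<xi>\<bar> \<le> V"
proof (rule Psi_jump[OF assms(2)])
  fix i x :: nat assume "i \<le> 1" "1 \<le> x" "x \<le> N"
  then have "1 \<le> v i x \<and> v i x \<le> V" using assms(1) unfolding vgood_def by blast
  then show "0 \<le> v i x \<and> v i x \<le> V" by simp
qed

lemma vgood_nn: "vgood v V \<Longrightarrow> nn N \<eta> \<le> Psi N v \<eta>"
  by (rule Psi_mono_v) (auto simp: vgood_def)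

lemma vgood_V: "vgood v V \<Longrightarrow> 1 \<le> V"
  unfolding vgood_def using N2 by (metis le_numeral_extra(1) order_trans one_le_numeral order.trans)

lemma FK_3K: "0 < K \<Longrightarrow> 2*K \<le> y \<Longrightarrow> FK K y = 3*K/2"
  unfolding FK_def by (auto simp: field_simps power2_eq_square)

lemma hK_E0:
  assumes v: "vgood v V" and K: "0 < K"
  shows "measure_pmf.expectation \<mu> (\<lambda>\<xi>. Lop (TR \<xi>) (hK v K) \<xi>) = 0"
proof (rule S1)
  fix \<eta> assume "hK v K \<eta> \<noteq> 0"
  then have h: "valid \<eta>" "FK K (Psi N v \<eta>) \<noteq> 3*K/2" unfolding hK_def by (auto split: if_splits)
  have "\<not> (2*K \<le> Psi N v \<eta>)" using FK_3K[OF K, of "Psi N v \<eta>"] h(2) by auto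
  then have "Psi N v \<eta> \<le> 2*K" by linarith
  then show "valid \<eta> \<and> nn N \<eta> \<le> 2*K" using h vgood_nn[OF v, of \<eta>] by auto
qed

lemma Lop_hK:
  assumes "valid \<xi>"
  shows "Lop (TR \<xi>) (hK v K) \<xi> = sum_list (map (\<lambda>p. snd p * (FK K (Psi N v (fst p)) - FK K (Psi N v \<xi>))) (TR \<xi>))"
  unfolding Lop_def
proof (intro arg_cong[where f=sum_list] map_cong refl)
  fix p assume p: "p \<in> set (TR \<xi>)"
  show "snd p * (hK v K (fst p) - hK v K \<xi>) = snd p * (FK K (Psi N v (fst p)) - FK K (Psi N v \<xi>))"
  proof (cases "snd p = 0")
    case False
    then have "valid (fst p)" using target_valid[OF assms p] by simp
    then show ?thesis using assms unfolding hK_def by simp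
  qed simp
qed

lemma hK_conc:
  assumes "valid \<xi>" "0 < K"
  shows "Lop (TR \<xi>) (hK v K) \<xi> \<le> thK K (Psi N v \<xi>) * LF \<xi> v"
proof -
  have "Lop (TR \<xi>) (hK v K) \<xi> \<le> sum_list (map (\<lambda>p. thK K (Psi N v \<xi>) * (snd p * (Psi N v (fst p) - Psi N v \<xi>))) (TR \<xi>))"
    unfolding Lop_hK[OF assms(1)]
  proof (rule sum_list_mono)
    fix p assume p: "p \<in> set (TR \<xi>)"
    have "snd p * (FK K (Psi N v (fst p)) - FK K (Psi N v \<xi>)) \<le> snd p * (thK K (Psi N v \<xi>) * (Psi N v (fst p) - Psi N v \<xi>))"
      using FK_taylor[OF assms(2), of "Psi N v (fst p)" "Psi N v \<xi>"] rate_nonneg[OF assms(1) p]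
      by (intro mult_left_mono) auto
    then show "snd p * (FK K (Psi N v (fst p)) - FK K (Psi N v \<xi>)) \<le> thK K (Psi N v \<xi>) * (snd p * (Psi N v (fst p) - Psi N v \<xi>))"
      by (simp add: algebra_simps)
  qed
  also have "\<dots> = thK K (Psi N v \<xi>) * Lop (TR \<xi>) (Psi N v) \<xi>"
    unfolding Lop_def by (simp add: sum_list_const_mult)
  finally show ?thesis by (simp add: LPsi')
qed

lemma hK_low:
  assumes "valid \<xi>" "0 < K" "vgood v V"
  shows "thK K (Psi N v \<xi>) * LF \<xi> v - real LN * (Bc * (1 + nn N \<xi>)^2 * V^2 / (2*K)) \<le> Lop (TR \<xi>) (hK v K) \<xi>"
proof -
  let ?t = "thK K (Psi N v \<xi>)"
  have "real LN * (- (Bc * (1 + nn N \<xi>)^2 * V^2 / (2*K))) \<le>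
      sum_list (map (\<lambda>p. snd p * (FK K (Psi N v (fst p)) - FK K (Psi N v \<xi>)) - ?t * (snd p * (Psi N v (fst p) - Psi N v \<xi>))) (TR \<xi>))"
    unfolding length_TR[symmetric, of \<xi>]
  proof (rule sum_list_lbound)
    fix p assume p: "p \<in> set (TR \<xi>)"
    let ?D = "Psi N v (fst p) - Psi N v \<xi>"
    let ?R = "FK K (Psi N v (fst p)) - FK K (Psi N v \<xi>) - ?t * ?D"
    have r0: "0 \<le> snd p" by (rule rate_nonneg[OF assms(1) p])
    have rb: "snd p \<le> Bc * (1 + nn N \<xi>)^2" by (rule rate_bound[OF assms(1) p])
    have R: "- (?D^2) / (2*K) \<le> ?R" "?R \<le> 0" using FK_taylor[OF assms(2)] by auto
    have "\<bar>?D\<bar>^2 \<le> V^2" using vgood_jump[OF assms(3) p] by (intro power_mono) auto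
    then have D: "?D^2 \<le> V^2" by simp
    have "- (Bc * (1 + nn N \<xi>)^2 * V^2 / (2*K)) \<le> snd p * (- (?D^2) / (2*K))"
    proof -
      have "snd p * (?D^2 / (2*K)) \<le> (Bc * (1 + nn N \<xi>)^2) * (V^2 / (2*K))"
        using r0 rb D assms(2) by (intro mult_mono divide_right_mono) auto
      then show ?thesis by (simp add: field_simps)
    qed
    also have "\<dots> \<le> snd p * ?R" using R(1) r0 by (intro mult_left_mono) auto
    also have "\<dots> = snd p * (FK K (Psi N v (fst p)) - FK K (Psi N v \<xi>)) - ?t * (snd p * ?D)" by (simp add: algebra_simps)
    finally show "- (Bc * (1 + nn N \<xi>)^2 * V^2 / (2*K)) \<le> snd p * (FK K (Psi N v (fst p)) - FK K (Psi N v \<xi>)) - ?t * (snd p * ?D)" .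
  qed
  also have "\<dots> = sum_list (map (\<lambda>p. snd p * (FK K (Psi N v (fst p)) - FK K (Psi N v \<xi>))) (TR \<xi>))
      - ?t * sum_list (map (\<lambda>p. snd p * (Psi N v (fst p) - Psi N v \<xi>)) (TR \<xi>))"
    by (rule sl_lin)
  also have "\<dots> = Lop (TR \<xi>) (hK v K) \<xi> - ?t * Lop (TR \<xi>) (Psi N v) \<xi>"
    unfolding Lop_hK[OF assms(1)] by (simp only: Lop_def)
  finally show ?thesis by (simp add: LPsi' algebra_simps)
qed

lemma hK_zero:
  assumes "valid \<xi>" "0 < K" "vgood v V" "2*K + V < Psi N v \<xi>"
  shows "Lop (TR \<xi>) (hK v K) \<xi> = 0"
proof -
  have "map (\<lambda>p. snd p * (FK K (Psi N v (fst p)) - FK K (Psi N v \<xi>))) (TR \<xi>) = map (\<lambda>_. 0) (TR \<xi>)"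
  proof (rule map_cong[OF refl])
    fix p assume p: "p \<in> set (TR \<xi>)"
    have "2*K \<le> Psi N v (fst p)" using vgood_jump[OF assms(3) p] assms(4) by linarith
    moreover have "2*K \<le> Psi N v \<xi>" using assms(4) vgood_V[OF assms(3)] by linarith
    ultimately have "FK K (Psi N v (fst p)) = 3*K/2" "FK K (Psi N v \<xi>) = 3*K/2" using FK_3K[OF assms(2)] by blast+
    then show "snd p * (FK K (Psi N v (fst p)) - FK K (Psi N v \<xi>)) = 0" by simp
  qed
  then show ?thesis unfolding Lop_hK[OF assms(1)] by (simp only: sum_list_0)
qed

lemma hK_lin:
  assumes "valid \<xi>" "vgood v V" "Psi N v \<xi> + V \<le> K"
  shows "Lop (TR \<xi>) (hK v K) \<xi> = LF \<xi> v"
proof -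
  have "map (\<lambda>p. snd p * (FK K (Psi N v (fst p)) - FK K (Psi N v \<xi>))) (TR \<xi>) = map (\<lambda>p. snd p * (Psi N v (fst p) - Psi N v \<xi>)) (TR \<xi>)"
  proof (rule map_cong[OF refl])
    fix p assume p: "p \<in> set (TR \<xi>)"
    have "Psi N v (fst p) \<le> K" using vgood_jump[OF assms(2) p] assms(3) by linarith
    moreover have "Psi N v \<xi> \<le> K" using assms(3) vgood_V[OF assms(2)] by linarith
    ultimately show "snd p * (FK K (Psi N v (fst p)) - FK K (Psi N v \<xi>)) = snd p * (Psi N v (fst p) - Psi N v \<xi>)"
      by (simp add: FK1)
  qed
  then have "Lop (TR \<xi>) (hK v K) \<xi> = Lop (TR \<xi>) (Psi N v) \<xi>"
    unfolding Lop_hK[OF assms(1)] by (simp only: Lop_def)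
  then show ?thesis by (simp add: LPsi')
qed

end


lemma SBP:
  fixes f g :: "nat \<Rightarrow> real"
  assumes "1 \<le> m"
  shows "(\<Sum>x\<in>{1..<m}. (f x - f (x+1)) * (g (x+1) - g x)) =
    (\<Sum>x\<in>{1..m}. g x * ((f (x-1) - f x) - (f x - f (x+1)))) - g 1 * (f 0 - f 1) + g m * (f m - f (m+1))"
  using assms
proof (induction m rule: nat_induct_at_least)
  case base
  then show ?case by (simp add: algebra_simps)
next
  case (Suc m)
  have a: "(\<Sum>x\<in>{1..<Suc m}. (f x - f (x+1)) * (g (x+1) - g x)) = (\<Sum>x\<in>{1..<m}. (f x - f (x+1)) * (g (x+1) - g x)) + (f m - f (m+1)) * (g (m+1) - g m)"
    using Suc by simp
  have b: "(\<Sum>x\<in>{1..Suc m}. g x * ((f (x-1) - f x) - (f x - f (x+1)))) = (\<Sum>x\<in>{1..m}. g x * ((f (x-1) - f x) - (f x - f (x+1)))) + g (Suc m) * ((f m - f (Suc m)) - (f (Suc m) - f (Suc m + 1)))"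
    using Suc by simp
  show ?case unfolding a b Suc.IH by (simp add: algebra_simps)
qed

definition Wv :: "nat \<Rightarrow> nat \<Rightarrow> nat \<Rightarrow> real" where
  "Wv N i x = real x * (real N + 1 - real x)"

lemma W_second: "1 \<le> x \<Longrightarrow> (Wv N i (x-1) - Wv N i x) - (Wv N i x - Wv N i (x+1)) = -2"
  unfolding Wv_def by (simp add: of_nat_diff algebra_simps)

lemma bulk_W:
  fixes r :: "nat \<Rightarrow> real"
  assumes "1 \<le> N"
  shows "(\<Sum>x\<in>{1..<N}. (r x - r (x+1)) * (Wv N i (x+1) - Wv N i x)) = -2 * (\<Sum>x\<in>{1..N}. r x) + real N * r 1 + real N * r N"
proof -
  have "(\<Sum>x\<in>{1..<N}. (r x - r (x+1)) * (Wv N i (x+1) - Wv N i x)) = (\<Sum>x\<in>{1..<N}. (Wv N i x - Wv N i (x+1)) * (r (x+1) - r x))"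
    by (rule sum.cong) (auto simp: algebra_simps)
  also have "\<dots> = (\<Sum>x\<in>{1..N}. r x * ((Wv N i (x-1) - Wv N i x) - (Wv N i x - Wv N i (x+1)))) - r 1 * (Wv N i 0 - Wv N i 1) + r N * (Wv N i N - Wv N i (N+1))"
    by (rule SBP[OF assms])
  also have "(\<Sum>x\<in>{1..N}. r x * ((Wv N i (x-1) - Wv N i x) - (Wv N i x - Wv N i (x+1)))) = (\<Sum>x\<in>{1..N}. -2 * r x)"
  proof (rule sum.cong[OF refl])
    fix x assume "x \<in> {1..N}"
    then show "r x * ((Wv N i (x-1) - Wv N i x) - (Wv N i x - Wv N i (x+1))) = -2 * r x"
      using W_second[of x N i] by simp
  qed
  finally show ?thesis by (simp add: Wv_def sum_distrib_left algebra_simps)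
qed

context stat
begin

lemma LF_W:
  "LF \<xi> (Wv N) \<le> real N * (a + b + c + d) - 2 * \<epsilon> * nn N \<xi>"
proof -
  have N1: "1 \<le> N" using N2 by simp
  let ?s0 = "\<Sum>x\<in>{1..N}. real (\<xi> 0 x)" and ?s1 = "\<Sum>x\<in>{1..N}. real (\<xi> 1 x)"
  have s0: "0 \<le> ?s0" "0 \<le> ?s1" by (auto intro: sum_nonneg)
  have nnE: "nn N \<xi> = ?s0 + ?s1" unfolding Psi_def by simp
  have eq: "LF \<xi> (Wv N) = -2 * ?s0 - 2 * \<epsilon> * ?s1 + real N * (a + b + c + d) + (\<epsilon> - 1) * real N * (real (\<xi> 1 1) + real (\<xi> 1 N))"
  proof -
    have b0: "(\<Sum>x\<in>{1..<N}. (real (\<xi> 0 x) - real (\<xi> 0 (x+1))) * (Wv N 0 (x+1) - Wv N 0 x)) = -2 * ?s0 + real N * real (\<xi> 0 1) + real N * real (\<xi> 0 N)"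
      by (rule bulk_W[OF N1])
    have b1: "(\<Sum>x\<in>{1..<N}. (real (\<xi> 1 x) - real (\<xi> 1 (x+1))) * (Wv N 1 (x+1) - Wv N 1 x)) = -2 * ?s1 + real N * real (\<xi> 1 1) + real N * real (\<xi> 1 N)"
      by (rule bulk_W[OF N1])
    have sw: "(\<Sum>x\<in>{1..N}. (real (\<xi> 0 x) - real (\<xi> 1 x)) * (Wv N 1 x - Wv N 0 x)) = 0"
      by (simp add: Wv_def)
    have w1: "Wv N i 1 = real N" "Wv N i N = real N" for i by (simp_all add: Wv_def)
    show ?thesis unfolding LinF_def b0 b1 sw w1 by (simp add: algebra_simps)
  qed
  have "(\<epsilon> - 1) * real N * (real (\<xi> 1 1) + real (\<xi> 1 N)) \<le> 0"
    using eps1 by (intro mult_nonpos_nonneg) (auto intro: mult_nonpos_nonneg)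
  moreover have "\<epsilon> * ?s0 \<le> 1 * ?s0" using eps1 s0 by (intro mult_right_mono) auto
  then have "-2 * ?s0 \<le> -2 * \<epsilon> * ?s0" by simp
  ultimately show ?thesis unfolding eq nnE by (simp add: algebra_simps)
qed

end


lemma fin_support_int:
  fixes f :: "'a \<Rightarrow> real"
  assumes "finite A" "\<And>x. x \<in> set_pmf \<mu> \<Longrightarrow> f x \<noteq> 0 \<Longrightarrow> x \<in> A"
  shows "integrable (measure_pmf \<mu>) f"
proof (rule measure_pmf.integrable_const_bound[where B="\<Sum>a\<in>A. \<bar>f a\<bar>"])
  show "AE x in measure_pmf \<mu>. norm (f x) \<le> (\<Sum>a\<in>A. \<bar>f a\<bar>)"
    unfolding AE_measure_pmf_iff
  proof
    fix x assume x: "x \<in> set_pmf \<mu>"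
    show "norm (f x) \<le> (\<Sum>a\<in>A. \<bar>f a\<bar>)"
    proof (cases "f x = 0")
      case True then show ?thesis by (simp add: sum_nonneg)
    next
      case False
      then have "x \<in> A" using assms(2) x by blast
      then show ?thesis using member_le_sum[of x A "\<lambda>a. \<bar>f a\<bar>"] assms(1) by simp
    qed
  qed
qed simp

context stat
begin

lemma vgood_W: "vgood (Wv N) ((real N + 1)^2)"
  unfolding vgood_def
proof (intro allI impI conjI)
  fix i x :: nat assume x: "1 \<le> x" "x \<le> N"
  have f1: "1 \<le> real x" "1 \<le> real N + 1 - real x" using x by auto
  have "1 * 1 \<le> real x * (real N + 1 - real x)" using f1 by (intro mult_mono) auto
  then show "1 \<le> Wv N i x" unfolding Wv_def by simp
  have "real x * (real N + 1 - real x) \<le> (real N + 1) * (real N + 1)" using f1 x by (intro mult_mono) auto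
  then show "Wv N i x \<le> (real N + 1)^2" unfolding Wv_def by (simp add: power2_eq_square)
qed

definition c0 :: real where "c0 = real N * (a + b + c + d)"

lemma c0_nonneg: "0 \<le> c0" unfolding c0_def using a0 b0 c0 d0 by simp

lemma G_bound:
  assumes K: "0 < K"
  shows "(\<Sum>\<xi>\<in>{\<xi>. valid \<xi> \<and> nn N \<xi> \<le> 2*K + (real N + 1)^2}. thK K (Psi N (Wv N) \<xi>) * nn N \<xi> * pmf \<mu> \<xi>) \<le> c0 / (2*\<epsilon>)"
proof -
  let ?V = "(real N + 1)^2"
  let ?G = "{\<xi>. valid \<xi> \<and> nn N \<xi> \<le> 2*K + ?V}"
  let ?t = "\<lambda>\<xi>. thK K (Psi N (Wv N) \<xi>)"
  have finG: "finite ?G" by (rule fin_valid_nn)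
  have "measure_pmf.expectation \<mu> (\<lambda>\<xi>. Lop (TR \<xi>) (hK (Wv N) K) \<xi>) = (\<Sum>\<xi>\<in>?G. Lop (TR \<xi>) (hK (Wv N) K) \<xi> * pmf \<mu> \<xi>)"
  proof (rule integral_measure_pmf_real[OF finG])
    fix \<xi> assume \<xi>: "\<xi> \<in> set_pmf \<mu>" "Lop (TR \<xi>) (hK (Wv N) K) \<xi> \<noteq> 0"
    have v: "valid \<xi>" using supp_valid[OF \<xi>(1)] .
    have "\<not> (2*K + ?V < Psi N (Wv N) \<xi>)" using hK_zero[OF v K vgood_W] \<xi>(2) by auto
    then have "nn N \<xi> \<le> 2*K + ?V" using vgood_nn[OF vgood_W, of \<xi>] by linarith
    then show "\<xi> \<in> ?G" using v by simp
  qed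
  then have "0 = (\<Sum>\<xi>\<in>?G. Lop (TR \<xi>) (hK (Wv N) K) \<xi> * pmf \<mu> \<xi>)" using hK_E0[OF vgood_W K] by simp
  also have "\<dots> \<le> (\<Sum>\<xi>\<in>?G. ?t \<xi> * (c0 - 2 * \<epsilon> * nn N \<xi>) * pmf \<mu> \<xi>)"
  proof (rule sum_mono)
    fix \<xi> assume "\<xi> \<in> ?G"
    then have v: "valid \<xi>" by simp
    have "Lop (TR \<xi>) (hK (Wv N) K) \<xi> \<le> ?t \<xi> * LF \<xi> (Wv N)" by (rule hK_conc[OF v K])
    also have "\<dots> \<le> ?t \<xi> * (c0 - 2 * \<epsilon> * nn N \<xi>)"
      using LF_W[of \<xi>] thK_bounds[OF K] unfolding c0_def by (intro mult_left_mono) auto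
    finally show "Lop (TR \<xi>) (hK (Wv N) K) \<xi> * pmf \<mu> \<xi> \<le> ?t \<xi> * (c0 - 2 * \<epsilon> * nn N \<xi>) * pmf \<mu> \<xi>"
      by (intro mult_right_mono) auto
  qed
  also have "\<dots> = c0 * (\<Sum>\<xi>\<in>?G. ?t \<xi> * pmf \<mu> \<xi>) - 2 * \<epsilon> * (\<Sum>\<xi>\<in>?G. ?t \<xi> * nn N \<xi> * pmf \<mu> \<xi>)"
    by (simp add: sum_subtractf sum_distrib_left algebra_simps)
  finally have A: "2 * \<epsilon> * (\<Sum>\<xi>\<in>?G. ?t \<xi> * nn N \<xi> * pmf \<mu> \<xi>) \<le> c0 * (\<Sum>\<xi>\<in>?G. ?t \<xi> * pmf \<mu> \<xi>)" by simp
  have "(\<Sum>\<xi>\<in>?G. ?t \<xi> * pmf \<mu> \<xi>) \<le> (\<Sum>\<xi>\<in>?G. pmf \<mu> \<xi>)"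
    using thK_bounds[OF K] by (intro sum_mono) (auto intro: mult_left_le_one_le)
  also have "\<dots> \<le> 1" using measure_measure_pmf_finite[OF finG, of \<mu>] measure_pmf.prob_le_1[of \<mu> ?G] by simp
  finally have "c0 * (\<Sum>\<xi>\<in>?G. ?t \<xi> * pmf \<mu> \<xi>) \<le> c0" using c0_nonneg by (simp add: mult_left_le)
  with A have "2 * \<epsilon> * (\<Sum>\<xi>\<in>?G. ?t \<xi> * nn N \<xi> * pmf \<mu> \<xi>) \<le> c0" by simp
  then show ?thesis using eps0 by (simp add: field_simps)
qed

lemma A_bound:
  assumes k: "1 \<le> k"
  shows "(\<Sum>\<xi>\<in>{\<xi>. valid \<xi> \<and> Psi N (Wv N) \<xi> \<le> k}. nn N \<xi> * pmf \<mu> \<xi>) \<le> c0 / (2*\<epsilon>)"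
proof -
  let ?V = "(real N + 1)^2"
  let ?A = "{\<xi>. valid \<xi> \<and> Psi N (Wv N) \<xi> \<le> k}"
  let ?G = "{\<xi>. valid \<xi> \<and> nn N \<xi> \<le> 2*k + ?V}"
  have K: "0 < k" using k by simp
  have AG: "?A \<subseteq> ?G"
  proof
    fix \<xi> assume h: "\<xi> \<in> ?A"
    have n1: "nn N \<xi> \<le> Psi N (Wv N) \<xi>" by (rule vgood_nn[OF vgood_W])
    have V0: "0 \<le> ?V" by simp
    have h2: "Psi N (Wv N) \<xi> \<le> k" "valid \<xi>" using h by auto
    have "nn N \<xi> \<le> 2*k + ?V" using n1 V0 h2 k by linarith
    then show "\<xi> \<in> ?G" using h2 by simp
  qed
  have finG: "finite ?G" by (rule fin_valid_nn)
  have "(\<Sum>\<xi>\<in>?A. nn N \<xi> * pmf \<mu> \<xi>) = (\<Sum>\<xi>\<in>?A. thK k (Psi N (Wv N) \<xi>) * nn N \<xi> * pmf \<mu> \<xi>)"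
    by (rule sum.cong) (auto simp: th1)
  also have "\<dots> \<le> (\<Sum>\<xi>\<in>?G. thK k (Psi N (Wv N) \<xi>) * nn N \<xi> * pmf \<mu> \<xi>)"
    by (rule sum_mono2[OF finG AG]) (use thK_bounds[OF K] in \<open>auto simp: Psi_nonneg\<close>)
  also have "\<dots> \<le> c0 / (2*\<epsilon>)" by (rule G_bound[OF K])
  finally show ?thesis .
qed

lemma nn_integrable: "integrable (measure_pmf \<mu>) (nn N)"
proof -
  define f where "f k \<xi> = (if valid \<xi> \<and> Psi N (Wv N) \<xi> \<le> real k then nn N \<xi> else 0)" for k \<xi>
  have finA: "finite {\<xi>. valid \<xi> \<and> Psi N (Wv N) \<xi> \<le> r}" for r
  proof -
    have "{\<xi>. valid \<xi> \<and> Psi N (Wv N) \<xi> \<le> r} \<subseteq> {\<xi>. valid \<xi> \<and> nn N \<xi> \<le> r}"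
    proof
      fix \<xi> assume "\<xi> \<in> {\<xi>. valid \<xi> \<and> Psi N (Wv N) \<xi> \<le> r}"
      then show "\<xi> \<in> {\<xi>. valid \<xi> \<and> nn N \<xi> \<le> r}" using vgood_nn[OF vgood_W, of \<xi>] by auto
    qed
    then show ?thesis using fin_valid_nn finite_subset by blast
  qed
  have fint: "integrable (measure_pmf \<mu>) (f k)" for k
    by (rule fin_support_int[OF finA[of "real k"]]) (auto simp: f_def split: if_splits)
  have fE: "measure_pmf.expectation \<mu> (f k) = (\<Sum>\<xi>\<in>{\<xi>. valid \<xi> \<and> Psi N (Wv N) \<xi> \<le> real k}. nn N \<xi> * pmf \<mu> \<xi>)" for k
    by (subst integral_measure_pmf_real[OF finA[of "real k"]]) (auto simp: f_def intro!: sum.cong split: if_splits)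
  have mono: "f k \<xi> \<le> f (Suc k) \<xi>" for k \<xi> unfolding f_def by (auto simp: Psi_nonneg)
  show ?thesis
  proof (rule integrable_monotone_convergence[where f=f and x="SUP k. measure_pmf.expectation \<mu> (f k)"])
    show "integrable (measure_pmf \<mu>) (f i)" for i by (rule fint)
    show "AE x in measure_pmf \<mu>. incseq (\<lambda>n. f n x)" by (auto intro!: incseq_SucI mono)
    show "AE x in measure_pmf \<mu>. (\<lambda>i. f i x) \<longlonglongrightarrow> nn N x"
      unfolding AE_measure_pmf_iff
    proof
      fix \<xi> assume "\<xi> \<in> set_pmf \<mu>"
      then have v: "valid \<xi>" by (rule supp_valid)
      show "(\<lambda>i. f i \<xi>) \<longlonglongrightarrow> nn N \<xi>"
      proof (rule tendsto_eventually)
        obtain k0 :: nat where "Psi N (Wv N) \<xi> \<le> real k0" using real_arch_simple by blast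
        then show "\<forall>\<^sub>F i in sequentially. f i \<xi> = nn N \<xi>"
          unfolding eventually_sequentially f_def using v by (intro exI[of _ k0]) auto
      qed
    qed
    have inc: "incseq (\<lambda>k. measure_pmf.expectation \<mu> (f k))"
      by (rule incseq_SucI, rule integral_mono[OF fint fint]) (rule mono)
    have bdd: "bdd_above (range (\<lambda>k. measure_pmf.expectation \<mu> (f k)))"
    proof (rule bdd_aboveI2)
      fix k :: nat
      show "measure_pmf.expectation \<mu> (f k) \<le> c0 / (2*\<epsilon>)"
      proof (cases "k = 0")
        case True
        have "measure_pmf.expectation \<mu> (f k) \<le> measure_pmf.expectation \<mu> (f 1)"
          using inc unfolding incseq_def by (simp add: True)
        also have "\<dots> \<le> c0 / (2*\<epsilon>)" unfolding fE by (rule A_bound) simp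
        finally show ?thesis .
      next
        case False
        then show ?thesis unfolding fE by (intro A_bound) simp
      qed
    qed
    show "(\<lambda>i. measure_pmf.expectation \<mu> (f i)) \<longlonglongrightarrow> (SUP k. measure_pmf.expectation \<mu> (f k))"
      by (rule LIMSEQ_incseq_SUP[OF bdd inc])
  qed simp
qed

lemma coord_integrable: "integrable (measure_pmf \<mu>) (\<lambda>\<xi>. real (\<xi> i x))"
proof (rule Bochner_Integration.integrable_bound[OF nn_integrable])
  show "AE \<xi> in measure_pmf \<mu>. norm (real (\<xi> i x)) \<le> norm (nn N \<xi>)"
    unfolding AE_measure_pmf_iff using valid_coord_le_nn supp_valid Psi_nonneg
    by (smt (verit, ccfv_SIG) real_norm_def of_nat_0_le_iff)
qed simp

end


context stat
begin

definition th :: "nat \<Rightarrow> nat \<Rightarrow> real" where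
  "th i x = measure_pmf.expectation \<mu> (\<lambda>\<xi>. real (\<xi> i x))"

lemma LF_integrable: "integrable (measure_pmf \<mu>) (\<lambda>\<xi>. LF \<xi> v)"
  unfolding LinF_def by (simp add: coord_integrable)

lemma LF_expect: "measure_pmf.expectation \<mu> (\<lambda>\<xi>. LF \<xi> v) = LinF \<epsilon> \<gamma> N a b c d th v"
  unfolding LinF_def th_def
  by (simp add: coord_integrable integral_add integral_diff integral_sum integral_mult_left_zero integral_mult_right_zero)


lemma s_bound:
  assumes v: "vgood v V" and xi: "valid \<xi>" and K: "1 \<le> K"
  shows "\<bar>Lop (TR \<xi>) (hK v K) \<xi>\<bar> \<le> \<bar>LF \<xi> v\<bar> + real LN * Bc * V^2 * (3 + V) / 2 * (1 + nn N \<xi>)"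
proof -
  let ?s = "Lop (TR \<xi>) (hK v K) \<xi>"
  let ?n = "nn N \<xi>"
  let ?C = "real LN * Bc * V^2 * (3 + V) / 2"
  have K0: "0 < K" using K by simp
  have n0: "0 \<le> ?n" by (simp add: Psi_nonneg)
  have V1: "1 \<le> V" by (rule vgood_V[OF v])
  have Bc0: "0 \<le> Bc" unfolding Bc_def using a0 b0 c0 d0 by simp
  have C0: "0 \<le> ?C * (1 + ?n)" using Bc0 V1 n0 by simp
  show ?thesis
  proof (cases "2*K + V < Psi N v \<xi>")
    case True
    then show ?thesis using hK_zero[OF xi K0 v True] C0 by simp
  next
    case False
    then have nb: "?n \<le> 2*K + V" using vgood_nn[OF v, of \<xi>] by linarith
    let ?t = "thK K (Psi N v \<xi>)"
    have t: "0 \<le> ?t" "?t \<le> 1" using thK_bounds[OF K0] by auto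
    have tl: "\<bar>?t * LF \<xi> v\<bar> \<le> \<bar>LF \<xi> v\<bar>"
      using t by (simp add: abs_mult mult_left_le_one_le)
    have up: "?s \<le> ?t * LF \<xi> v" by (rule hK_conc[OF xi K0])
    have low: "?t * LF \<xi> v - real LN * (Bc * (1 + ?n)^2 * V^2 / (2*K)) \<le> ?s" by (rule hK_low[OF xi K0 v])
    have "(1 + ?n)^2 / (2*K) \<le> (1 + ?n) * (3 + V) / 2"
    proof -
      have "(1 + ?n)^2 \<le> (1 + ?n) * (1 + 2*K + V)" unfolding power2_eq_square
        using nb n0 by (intro mult_left_mono) auto
      also have "\<dots> \<le> (1 + ?n) * (K * (3 + V))"
      proof (rule mult_left_mono)
        have "K * V \<ge> 1 * V" using K V1 by (intro mult_right_mono) auto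
        then show "1 + 2*K + V \<le> K * (3 + V)" using K by (simp add: algebra_simps)
      qed (use n0 in simp)
      finally have "(1 + ?n)^2 \<le> (1 + ?n) * (K * (3 + V))" .
      then show ?thesis using K0 by (simp add: field_simps)
    qed
    then have "real LN * (Bc * V^2) * ((1 + ?n)^2 / (2*K)) \<le> real LN * (Bc * V^2) * ((1 + ?n) * (3 + V) / 2)"
      using Bc0 by (intro mult_left_mono) auto
    then have e: "real LN * (Bc * (1 + ?n)^2 * V^2 / (2*K)) \<le> ?C * (1 + ?n)"
      by (simp add: field_simps)
    show ?thesis using up low tl e by linarith
  qed
qed

lemma LF_mean0:
  assumes v: "vgood v V"
  shows "measure_pmf.expectation \<mu> (\<lambda>\<xi>. LF \<xi> v) = 0"
proof -
  define s where "s k \<xi> = Lop (TR \<xi>) (hK v (real k + 1)) \<xi>" for k \<xi>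
  let ?C = "real LN * Bc * V^2 * (3 + V) / 2"
  have lim: "(\<lambda>k. measure_pmf.expectation \<mu> (s k)) \<longlonglongrightarrow> measure_pmf.expectation \<mu> (\<lambda>\<xi>. LF \<xi> v)"
  proof (rule integral_dominated_convergence[where w="\<lambda>\<xi>. \<bar>LF \<xi> v\<bar> + ?C * (1 + nn N \<xi>)"])
    show "integrable (measure_pmf \<mu>) (\<lambda>\<xi>. \<bar>LF \<xi> v\<bar> + ?C * (1 + nn N \<xi>))"
      using LF_integrable nn_integrable by simp
    show "AE \<xi> in measure_pmf \<mu>. (\<lambda>k. s k \<xi>) \<longlonglongrightarrow> LF \<xi> v"
      unfolding AE_measure_pmf_iff
    proof
      fix \<xi> assume "\<xi> \<in> set_pmf \<mu>"
      then have xi: "valid \<xi>" by (rule supp_valid)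
      show "(\<lambda>k. s k \<xi>) \<longlonglongrightarrow> LF \<xi> v"
      proof (rule tendsto_eventually)
        obtain k0 :: nat where "Psi N v \<xi> + V \<le> real k0" using real_arch_simple by blast
        then show "\<forall>\<^sub>F k in sequentially. s k \<xi> = LF \<xi> v"
          unfolding eventually_sequentially s_def
          by (intro exI[of _ k0] allI impI hK_lin[OF xi v]) auto
      qed
    qed
    show "AE \<xi> in measure_pmf \<mu>. norm (s k \<xi>) \<le> \<bar>LF \<xi> v\<bar> + ?C * (1 + nn N \<xi>)" for k
      unfolding AE_measure_pmf_iff s_def
      using s_bound[OF v supp_valid] by simp
  qed simp_all
  have "measure_pmf.expectation \<mu> (s k) = 0" for k
    unfolding s_def by (rule hK_E0[OF v]) simp
  then have "(\<lambda>k. measure_pmf.expectation \<mu> (s k)) \<longlonglongrightarrow> 0" by simp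
  with lim show ?thesis using LIMSEQ_unique by blast
qed

lemma LinF_th_pos: "vgood v V \<Longrightarrow> LinF \<epsilon> \<gamma> N a b c d th v = 0"
  using LF_mean0 LF_expect by simp

end


lemma U4: "(UNIV :: 4 set) = {1,2,3,4}" using exhaust_4 by auto
lemma v41: "(vector [p,q,r,s] :: 'a::zero^4) $ 1 = p" by (simp add: vector_def)
lemma v42: "(vector [p,q,r,s] :: 'a::zero^4) $ 2 = q" by (simp add: vector_def)
lemma v43: "(vector [p,q,r,s] :: 'a::zero^4) $ 3 = r" by (simp add: vector_def)
lemma v44: "(vector [p,q,r,s] :: 'a::zero^4) $ 4 = s" by (simp add: vector_def)
lemma sum4: "(\<Sum>j\<in>(UNIV::4 set). f j) = f 1 + f 2 + f 3 + f 4"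
  unfolding U4 by (simp add: add.assoc)

lemma Mv1: "(Mmat e g N *v z) $ 1 = z$2 + e * z$3 + e * z$4"
  unfolding Mmat_def Let_def matrix_vector_mult_def vec_lambda_beta sum4 v41 v42 v43 v44 by simp
lemma Mv2: "(Mmat e g N *v z) $ 2 = (1 - e) * z$1 + z$2 + ((e - 1) * alpha1 e g - e) * z$3 + ((e - 1) * alpha2 e g - e) * z$4"
  unfolding Mmat_def Let_def matrix_vector_mult_def vec_lambda_beta sum4 v41 v42 v43 v44 by simp
lemma Mv3: "(Mmat e g N *v z) $ 3 = (real N + 1) * z$1 + z$2 + e * alpha1 e g ^ (N+1) * z$3 + e * alpha2 e g ^ (N+1) * z$4"
  unfolding Mmat_def Let_def matrix_vector_mult_def vec_lambda_beta sum4 v41 v42 v43 v44 by simp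
lemma Mv4: "(Mmat e g N *v z) $ 4 = (real N + e) * z$1 + z$2 - alpha1 e g ^ N * (e * alpha1 e g + 1 - e) * z$3 - alpha2 e g ^ N * (e * alpha2 e g + 1 - e) * z$4"
  unfolding Mmat_def Let_def matrix_vector_mult_def vec_lambda_beta sum4 v41 v42 v43 v44 by simp

context sys
begin

abbreviation "A1 \<equiv> alpha1 \<epsilon> \<gamma>"
abbreviation "A2 \<equiv> alpha2 \<epsilon> \<gamma>"

lemma alpha_facts: "0 < A1" "0 < A2" "A1 \<noteq> A2" "\<epsilon> * (A1 - 1)^2 = \<gamma> * (1 + \<epsilon>) * A1" "\<epsilon> * (A2 - 1)^2 = \<gamma> * (1 + \<epsilon>) * A2"
proof -
  define s where "s = 1 + \<gamma>/2 * (1 + 1/\<epsilon>)"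
  have s1: "1 < s" unfolding s_def using gam eps0 by (simp add: add_pos_pos)
  define r where "r = sqrt (s^2 - 1)"
  have s2: "1 < s^2" using s1 by (metis less_1_mult power2_eq_square zero_less_one less_trans)
  have r2: "r^2 = s^2 - 1" unfolding r_def using s2 by simp
  have r0: "0 < r" unfolding r_def using s2 by simp
  have a1: "A1 = s - r" unfolding alpha1_def s_def r_def by simp
  have a2: "A2 = s + r" unfolding alpha2_def s_def r_def by simp
  show "0 < A2" using a2 s1 r0 by simp
  have prod: "A1 * A2 = 1" unfolding a1 a2 using r2 by (simp add: algebra_simps power2_eq_square)
  show "0 < A1" using prod \<open>0 < A2\<close> by (metis zero_less_mult_pos2 zero_less_one)
  show "A1 \<noteq> A2" unfolding a1 a2 using r0 by simp
  have es: "2 * \<epsilon> * s = 2 * \<epsilon> + \<gamma> * (1 + \<epsilon>)" unfolding s_def using eps0 by (simp add: field_simps)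
  have q: "\<alpha>^2 - 2 * s * \<alpha> + 1 = 0" if "\<alpha> = s - r \<or> \<alpha> = s + r" for \<alpha>
    using that r2 by (auto simp: algebra_simps power2_eq_square)
  have root: "\<epsilon> * (\<alpha> - 1)^2 = \<gamma> * (1 + \<epsilon>) * \<alpha>" if "\<alpha> = s - r \<or> \<alpha> = s + r" for \<alpha>
  proof -
    have "\<epsilon> * (\<alpha> - 1)^2 - \<gamma> * (1 + \<epsilon>) * \<alpha> = \<epsilon> * (\<alpha>^2 - 2 * s * \<alpha> + 1) + \<alpha> * (2 * \<epsilon> * s - 2 * \<epsilon> - \<gamma> * (1 + \<epsilon>))"
      by (simp add: algebra_simps power2_eq_square)
    also have "\<dots> = 0" using q[OF that] es by simp
    finally show ?thesis by simp
  qed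
  show "\<epsilon> * (A1 - 1)^2 = \<gamma> * (1 + \<epsilon>) * A1" using root a1 by simp
  show "\<epsilon> * (A2 - 1)^2 = \<gamma> * (1 + \<epsilon>) * A2" using root a2 by simp
qed

definition phiz :: "real^4 \<Rightarrow> nat \<Rightarrow> nat \<Rightarrow> real" where
  "phiz z i x = (if i = 0 then z$1 * real x + z$2 + \<epsilon> * z$3 * A1^x + \<epsilon> * z$4 * A2^x
                 else z$1 * real x + z$2 - z$3 * A1^x - z$4 * A2^x)"

lemma bulk_zero:
  assumes "1 \<le> x"
  shows "((phiz z 0 (x-1) - phiz z 0 x) - (phiz z 0 x - phiz z 0 (x+1))) + \<gamma> * (phiz z 1 x - phiz z 0 x) = 0"
    and "\<epsilon> * ((phiz z 1 (x-1) - phiz z 1 x) - (phiz z 1 x - phiz z 1 (x+1))) + \<gamma> * (phiz z 0 x - phiz z 1 x) = 0"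
proof -
  obtain m where m: "x = Suc m" using assms by (cases x) auto
  have R1: "\<epsilon> * (A1 - 1)^2 - \<gamma> * (1 + \<epsilon>) * A1 = 0" and R2: "\<epsilon> * (A2 - 1)^2 - \<gamma> * (1 + \<epsilon>) * A2 = 0"
    using alpha_facts by simp_all
  have "((phiz z 0 (x-1) - phiz z 0 x) - (phiz z 0 x - phiz z 0 (x+1))) + \<gamma> * (phiz z 1 x - phiz z 0 x)
     = z$3 * A1^m * (\<epsilon> * (A1 - 1)^2 - \<gamma> * (1 + \<epsilon>) * A1) + z$4 * A2^m * (\<epsilon> * (A2 - 1)^2 - \<gamma> * (1 + \<epsilon>) * A2)"
    unfolding phiz_def m by (simp add: algebra_simps power2_eq_square)
  then show "((phiz z 0 (x-1) - phiz z 0 x) - (phiz z 0 x - phiz z 0 (x+1))) + \<gamma> * (phiz z 1 x - phiz z 0 x) = 0"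
    using R1 R2 by simp
  have "\<epsilon> * ((phiz z 1 (x-1) - phiz z 1 x) - (phiz z 1 x - phiz z 1 (x+1))) + \<gamma> * (phiz z 0 x - phiz z 1 x)
     = - z$3 * A1^m * (\<epsilon> * (A1 - 1)^2 - \<gamma> * (1 + \<epsilon>) * A1) - z$4 * A2^m * (\<epsilon> * (A2 - 1)^2 - \<gamma> * (1 + \<epsilon>) * A2)"
    unfolding phiz_def m by (simp add: algebra_simps power2_eq_square)
  then show "\<epsilon> * ((phiz z 1 (x-1) - phiz z 1 x) - (phiz z 1 x - phiz z 1 (x+1))) + \<gamma> * (phiz z 0 x - phiz z 1 x) = 0"
    using R1 R2 by simp
qed


lemma LinF_phiz:
  "LinF \<epsilon> \<gamma> N 0 0 0 0 (phiz z) v = - ((Mmat \<epsilon> \<gamma> N *v z)$1) * v 0 1 - ((Mmat \<epsilon> \<gamma> N *v z)$2) * v 1 1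
     - ((Mmat \<epsilon> \<gamma> N *v z)$3) * v 0 N - ((Mmat \<epsilon> \<gamma> N *v z)$4) * v 1 N"
proof -
  have N1: "1 \<le> N" using N2 by simp
  let ?p0 = "phiz z 0" and ?p1 = "phiz z 1"
  have S0: "(\<Sum>x\<in>{1..<N}. (?p0 x - ?p0 (x+1)) * (v 0 (x+1) - v 0 x)) =
    (\<Sum>x\<in>{1..N}. v 0 x * ((?p0 (x-1) - ?p0 x) - (?p0 x - ?p0 (x+1)))) - v 0 1 * (?p0 0 - ?p0 1) + v 0 N * (?p0 N - ?p0 (N+1))"
    by (rule SBP[OF N1])
  have S1: "(\<Sum>x\<in>{1..<N}. (?p1 x - ?p1 (x+1)) * (v 1 (x+1) - v 1 x)) =
    (\<Sum>x\<in>{1..N}. v 1 x * ((?p1 (x-1) - ?p1 x) - (?p1 x - ?p1 (x+1)))) - v 1 1 * (?p1 0 - ?p1 1) + v 1 N * (?p1 N - ?p1 (N+1))"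
    by (rule SBP[OF N1])
  have Z: "(\<Sum>x\<in>{1..N}. v 0 x * ((?p0 (x-1) - ?p0 x) - (?p0 x - ?p0 (x+1))))
     + \<epsilon> * (\<Sum>x\<in>{1..N}. v 1 x * ((?p1 (x-1) - ?p1 x) - (?p1 x - ?p1 (x+1))))
     + \<gamma> * (\<Sum>x\<in>{1..N}. (?p0 x - ?p1 x) * (v 1 x - v 0 x)) = 0"
  proof -
    have "(\<Sum>x\<in>{1..N}. v 0 x * (((?p0 (x-1) - ?p0 x) - (?p0 x - ?p0 (x+1))) + \<gamma> * (?p1 x - ?p0 x))
          + v 1 x * (\<epsilon> * ((?p1 (x-1) - ?p1 x) - (?p1 x - ?p1 (x+1))) + \<gamma> * (?p0 x - ?p1 x)))
      = (\<Sum>x\<in>{1..N}. v 0 x * ((?p0 (x-1) - ?p0 x) - (?p0 x - ?p0 (x+1)))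
          + \<epsilon> * (v 1 x * ((?p1 (x-1) - ?p1 x) - (?p1 x - ?p1 (x+1)))) + \<gamma> * ((?p0 x - ?p1 x) * (v 1 x - v 0 x)))"
      by (rule sum.cong) (simp_all add: algebra_simps)
    also have "\<dots> = (\<Sum>x\<in>{1..N}. v 0 x * ((?p0 (x-1) - ?p0 x) - (?p0 x - ?p0 (x+1))))
     + \<epsilon> * (\<Sum>x\<in>{1..N}. v 1 x * ((?p1 (x-1) - ?p1 x) - (?p1 x - ?p1 (x+1))))
     + \<gamma> * (\<Sum>x\<in>{1..N}. (?p0 x - ?p1 x) * (v 1 x - v 0 x))"
      by (simp add: sum.distrib sum_distrib_left)
    finally have eq: "(\<Sum>x\<in>{1..N}. v 0 x * ((?p0 (x-1) - ?p0 x) - (?p0 x - ?p0 (x+1))))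
     + \<epsilon> * (\<Sum>x\<in>{1..N}. v 1 x * ((?p1 (x-1) - ?p1 x) - (?p1 x - ?p1 (x+1))))
     + \<gamma> * (\<Sum>x\<in>{1..N}. (?p0 x - ?p1 x) * (v 1 x - v 0 x))
     = (\<Sum>x\<in>{1..N}. v 0 x * (((?p0 (x-1) - ?p0 x) - (?p0 x - ?p0 (x+1))) + \<gamma> * (?p1 x - ?p0 x))
          + v 1 x * (\<epsilon> * ((?p1 (x-1) - ?p1 x) - (?p1 x - ?p1 (x+1))) + \<gamma> * (?p0 x - ?p1 x)))" by simp
    also have "\<dots> = 0"
    proof (rule sum.neutral, rule ballI)
      fix x assume "x \<in> {1..N}"
      then have x1: "1 \<le> x" by simp
      show "v 0 x * (((?p0 (x-1) - ?p0 x) - (?p0 x - ?p0 (x+1))) + \<gamma> * (?p1 x - ?p0 x))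
          + v 1 x * (\<epsilon> * ((?p1 (x-1) - ?p1 x) - (?p1 x - ?p1 (x+1))) + \<gamma> * (?p0 x - ?p1 x)) = 0"
        by (simp only: bulk_zero[OF x1] mult_zero_right add_0_right)
    qed
    finally show ?thesis .
  qed
  have P: "?p0 0 = z$2 + \<epsilon> * z$3 + \<epsilon> * z$4" "?p1 0 = z$2 - z$3 - z$4"
    "?p0 1 = z$1 + z$2 + \<epsilon> * z$3 * A1 + \<epsilon> * z$4 * A2" "?p1 1 = z$1 + z$2 - z$3 * A1 - z$4 * A2"
    "?p0 (N+1) = z$1 * (real N + 1) + z$2 + \<epsilon> * z$3 * A1^(N+1) + \<epsilon> * z$4 * A2^(N+1)"
    "?p1 (N+1) = z$1 * (real N + 1) + z$2 - z$3 * A1^(N+1) - z$4 * A2^(N+1)"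
    "?p0 N = z$1 * real N + z$2 + \<epsilon> * z$3 * A1^N + \<epsilon> * z$4 * A2^N"
    "?p1 N = z$1 * real N + z$2 - z$3 * A1^N - z$4 * A2^N"
    unfolding phiz_def by simp_all
  have "LinF \<epsilon> \<gamma> N 0 0 0 0 (phiz z) v =
     - v 0 1 * ?p0 0 - v 1 1 * (\<epsilon> * ?p1 0 + (1 - \<epsilon>) * ?p1 1) - v 0 N * ?p0 (N+1) - v 1 N * (\<epsilon> * ?p1 (N+1) + (1 - \<epsilon>) * ?p1 N)"
    using Z unfolding LinF_def S0 S1 by (simp add: algebra_simps)
  also have "\<dots> = - ((Mmat \<epsilon> \<gamma> N *v z)$1) * v 0 1 - ((Mmat \<epsilon> \<gamma> N *v z)$2) * v 1 1
     - ((Mmat \<epsilon> \<gamma> N *v z)$3) * v 0 N - ((Mmat \<epsilon> \<gamma> N *v z)$4) * v 1 N"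
    unfolding Mv1 Mv2 Mv3 Mv4 P by (simp add: algebra_simps)
  finally show ?thesis .
qed

lemma LinF0_self:
  "LinF \<epsilon> \<gamma> N 0 0 0 0 u u = - ((\<Sum>x\<in>{1..<N}. (u 0 x - u 0 (x+1))^2) + \<epsilon> * (\<Sum>x\<in>{1..<N}. (u 1 x - u 1 (x+1))^2)
     + \<gamma> * (\<Sum>x\<in>{1..N}. (u 0 x - u 1 x)^2) + (u 0 1)^2 + (u 1 1)^2 + (u 0 N)^2 + (u 1 N)^2)"
proof -
  have e: "\<And>f :: nat \<Rightarrow> real. \<And>A. (\<Sum>x\<in>A. (f x - f (x+1)) * (f (x+1) - f x)) = - (\<Sum>x\<in>A. (f x - f (x+1))^2)"
    by (simp add: sum_negf[symmetric] power2_eq_square algebra_simps)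
  have e2: "(\<Sum>x\<in>{1..N}. (u 0 x - u 1 x) * (u 1 x - u 0 x)) = - (\<Sum>x\<in>{1..N}. (u 0 x - u 1 x)^2)"
    by (simp add: sum_negf[symmetric] power2_eq_square algebra_simps)
  show ?thesis unfolding LinF_def e e2 by (simp add: power2_eq_square algebra_simps)
qed

lemma uniq:
  assumes h: "\<And>v. LinF \<epsilon> \<gamma> N 0 0 0 0 u v = 0" and i: "i \<le> 1" and x: "1 \<le> x" "x \<le> N"
  shows "u i x = 0"
proof -
  let ?T0 = "\<Sum>x\<in>{1..<N}. (u 0 x - u 0 (x+1))^2" and ?T1 = "\<Sum>x\<in>{1..<N}. (u 1 x - u 1 (x+1))^2"
    and ?T2 = "\<Sum>x\<in>{1..N}. (u 0 x - u 1 x)^2"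
  have t: "0 \<le> ?T0" "0 \<le> ?T1" "0 \<le> ?T2" by (auto intro: sum_nonneg)
  have z: "?T0 + \<epsilon> * ?T1 + \<gamma> * ?T2 + (u 0 1)^2 + (u 1 1)^2 + (u 0 N)^2 + (u 1 N)^2 = 0"
    using h[of u] unfolding LinF0_self by simp
  have e1: "0 \<le> \<epsilon> * ?T1" "0 \<le> \<gamma> * ?T2" using t eps0 gam by auto
  have sq: "0 \<le> (u 0 1)^2" "0 \<le> (u 1 1)^2" "0 \<le> (u 0 N)^2" "0 \<le> (u 1 N)^2" by auto
  have T0: "?T0 = 0" and T1e: "\<epsilon> * ?T1 = 0" and d01: "(u 0 1)^2 = 0" and d11: "(u 1 1)^2 = 0"
    using z t e1 sq by linarith+
  have T1: "?T1 = 0" using T1e eps0 by simp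
  have step: "u j y = u j (y+1)" if "j \<le> 1" "y \<in> {1..<N}" for j y
  proof -
    have "(u j y - u j (y+1))^2 = 0"
    proof (cases "j = 0")
      case True
      then show ?thesis using T0 that(2) by (subst (asm) sum_nonneg_eq_0_iff) auto
    next
      case False
      then have "j = 1" using that by auto
      then show ?thesis using T1 that(2) by (subst (asm) sum_nonneg_eq_0_iff) auto
    qed
    then show ?thesis by simp
  qed
  have "i = 0 \<or> i = 1" using i by auto
  then have base: "u i 1 = 0" using d01 d11 by auto
  have "\<forall>y. 1 \<le> y \<longrightarrow> y \<le> N \<longrightarrow> u i y = 0"
  proof (intro allI)
    fix y show "1 \<le> y \<longrightarrow> y \<le> N \<longrightarrow> u i y = 0"
    proof (induction y)
      case 0 then show ?case by simp
    next
      case (Suc m)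
      show ?case
      proof (cases "m = 0")
        case True then show ?thesis using base by simp
      next
        case False
        show ?thesis
        proof (intro impI)
          assume "Suc m \<le> N"
          then have "u i m = 0" using Suc.IH False by simp
          moreover have "u i m = u i (m+1)" using step[OF i, of m] False \<open>Suc m \<le> N\<close> by simp
          ultimately show "u i (Suc m) = 0" by simp
        qed
      qed
    qed
  qed
  then show ?thesis using x by blast
qed

lemma M_inj:
  assumes "Mmat \<epsilon> \<gamma> N *v z = 0"
  shows "z = 0"
proof -
  have h: "\<And>v. LinF \<epsilon> \<gamma> N 0 0 0 0 (phiz z) v = 0" unfolding LinF_phiz using assms by simp
  have p: "phiz z i x = 0" if "i \<le> 1" "1 \<le> x" "x \<le> N" for i x by (rule uniq[OF h that])
  have x2: "2 \<le> N" by (rule N2)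
  have q1: "phiz z 0 1 - phiz z 1 1 = 0" "phiz z 0 2 - phiz z 1 2 = 0"
    "phiz z 0 1 + \<epsilon> * phiz z 1 1 = 0" "phiz z 0 2 + \<epsilon> * phiz z 1 2 = 0" using p x2 by auto
  have c1: "(1 + \<epsilon>) * (z$3 * A1 + z$4 * A2) = 0" using q1(1) unfolding phiz_def by (simp add: algebra_simps)
  have c2: "(1 + \<epsilon>) * (z$3 * A1^2 + z$4 * A2^2) = 0" using q1(2) unfolding phiz_def by (simp add: algebra_simps)
  have c3: "(1 + \<epsilon>) * (z$1 + z$2) = 0" using q1(3) unfolding phiz_def by (simp add: algebra_simps)
  have c4: "(1 + \<epsilon>) * (2 * z$1 + z$2) = 0" using q1(4) unfolding phiz_def by (simp add: algebra_simps)
  have ep: "1 + \<epsilon> \<noteq> 0" using eps0 by simp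
  have e1: "z$3 * A1 + z$4 * A2 = 0" using c1 ep by simp
  have e2: "z$3 * A1^2 + z$4 * A2^2 = 0" using c2 ep by simp
  have "z$4 * A2 * (A2 - A1) = (z$3 * A1^2 + z$4 * A2^2) - A1 * (z$3 * A1 + z$4 * A2)"
    by (simp add: algebra_simps power2_eq_square)
  then have "z$4 * A2 * (A2 - A1) = 0" using e1 e2 by simp
  then have z4: "z$4 = 0" using alpha_facts by simp
  then have z3: "z$3 = 0" using e1 alpha_facts by simp
  have z1: "z$1 = 0" and z2: "z$2 = 0" using c3 c4 ep by auto
  show ?thesis unfolding vec_eq_iff using z1 z2 z3 z4 exhaust_4 by (metis zero_index)
qed

lemma M_inv: "Mmat \<epsilon> \<gamma> N *v (matrix_inv (Mmat \<epsilon> \<gamma> N) *v y) = y"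
proof -
  let ?M = "Mmat \<epsilon> \<gamma> N"
  have "\<exists>B. B ** ?M = mat 1" unfolding matrix_left_invertible_ker using M_inj by blast
  then obtain B where B: "B ** ?M = mat 1" by blast
  then have "?M ** B = mat 1" using matrix_left_right_inverse by blast
  then have ex: "\<exists>A'. ?M ** A' = mat 1 \<and> A' ** ?M = mat 1" using B by blast
  have "?M ** matrix_inv ?M = mat 1"
    unfolding matrix_inv_def using someI_ex[OF ex] by blast
  then show ?thesis by (simp add: matrix_vector_mul_assoc)
qed

end


lemma LinF_add_v: "LinF e g N a b c d r (\<lambda>i x. v1 i x + v2 i x) = LinF e g N a b c d r v1 + LinF e g N a b c d r v2"
proof -
  have s1: "(\<Sum>x\<in>{1..<N}. (r i x - r i (x+1)) * ((v1 i (x+1) + v2 i (x+1)) - (v1 i x + v2 i x)))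
     = (\<Sum>x\<in>{1..<N}. (r i x - r i (x+1)) * (v1 i (x+1) - v1 i x)) + (\<Sum>x\<in>{1..<N}. (r i x - r i (x+1)) * (v2 i (x+1) - v2 i x))" for i
    by (simp add: sum.distrib[symmetric] algebra_simps)
  have s2: "(\<Sum>x\<in>{1..N}. (r 0 x - r 1 x) * ((v1 1 x + v2 1 x) - (v1 0 x + v2 0 x)))
     = (\<Sum>x\<in>{1..N}. (r 0 x - r 1 x) * (v1 1 x - v1 0 x)) + (\<Sum>x\<in>{1..N}. (r 0 x - r 1 x) * (v2 1 x - v2 0 x))"
    by (simp add: sum.distrib[symmetric] algebra_simps)
  show ?thesis unfolding LinF_def s1 s2 by (simp add: algebra_simps)
qed

lemma LinF_abcd: "LinF e g N a b c d r v = LinF e g N 0 0 0 0 r v + a * v 0 1 + b * v 1 1 + c * v 0 N + d * v 1 N"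
  unfolding LinF_def by (simp add: algebra_simps)

lemma LinF_sub_r: "LinF e g N 0 0 0 0 (\<lambda>i x. r1 i x - r2 i x) v = LinF e g N a b c d r1 v - LinF e g N a b c d r2 v"
proof -
  have s1: "(\<Sum>x\<in>{1..<N}. ((r1 i x - r2 i x) - (r1 i (x+1) - r2 i (x+1))) * (v i (x+1) - v i x))
     = (\<Sum>x\<in>{1..<N}. (r1 i x - r1 i (x+1)) * (v i (x+1) - v i x)) - (\<Sum>x\<in>{1..<N}. (r2 i x - r2 i (x+1)) * (v i (x+1) - v i x))" for i
    by (simp add: sum_subtractf[symmetric] algebra_simps)
  have s2: "(\<Sum>x\<in>{1..N}. ((r1 0 x - r2 0 x) - (r1 1 x - r2 1 x)) * (v 1 x - v 0 x))
     = (\<Sum>x\<in>{1..N}. (r1 0 x - r1 1 x) * (v 1 x - v 0 x)) - (\<Sum>x\<in>{1..N}. (r2 0 x - r2 1 x) * (v 1 x - v 0 x))"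
    by (simp add: sum_subtractf[symmetric] algebra_simps)
  show ?thesis unfolding LinF_def s1 s2 by (simp add: algebra_simps)
qed

context stat
begin

lemma LinF_th_all: "LinF \<epsilon> \<gamma> N a b c d th v = 0"
proof -
  define C where "C = 1 + (\<Sum>x\<in>{1..N}. \<bar>v 0 x\<bar> + \<bar>v 1 x\<bar>)"
  have vle: "\<bar>v i x\<bar> \<le> C - 1" if "i \<le> 1" "1 \<le> x" "x \<le> N" for i x
  proof -
    have xin: "x \<in> {1..N}" using that by simp
    have "\<bar>v 0 x\<bar> + \<bar>v 1 x\<bar> \<le> (\<Sum>x\<in>{1..N}. \<bar>v 0 x\<bar> + \<bar>v 1 x\<bar>)"
      by (rule member_le_sum[OF xin]) auto
    moreover have "i = 0 \<or> i = 1" using that by auto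
    ultimately show ?thesis unfolding C_def by auto
  qed
  have C1: "1 \<le> C" unfolding C_def by (simp add: sum_nonneg)
  have g2: "vgood (\<lambda>_ _. C) C" unfolding vgood_def using C1 by simp
  have g1: "vgood (\<lambda>i x. v i x + C) (2 * C)" unfolding vgood_def
  proof (intro allI impI conjI)
    fix i x :: nat assume "i \<le> 1" "1 \<le> x" "x \<le> N"
    then have "\<bar>v i x\<bar> \<le> C - 1" by (rule vle)
    then show "1 \<le> v i x + C" "v i x + C \<le> 2 * C" by auto
  qed
  have "LinF \<epsilon> \<gamma> N a b c d th (\<lambda>i x. v i x + C) = LinF \<epsilon> \<gamma> N a b c d th v + LinF \<epsilon> \<gamma> N a b c d th (\<lambda>_ _. C)"
    by (rule LinF_add_v)
  then show ?thesis using LinF_th_pos[OF g1] LinF_th_pos[OF g2] by simp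
qed

definition zs :: "real^4" where "zs = matrix_inv (Mmat \<epsilon> \<gamma> N) *v vector [a, b, c, d]"

lemma phiz_sol: "LinF \<epsilon> \<gamma> N a b c d (phiz zs) v = 0"
proof -
  have M: "Mmat \<epsilon> \<gamma> N *v zs = vector [a, b, c, d]" unfolding zs_def by (rule M_inv)
  show ?thesis unfolding LinF_abcd[of _ _ _ a b c d] LinF_phiz M v41 v42 v43 v44 by simp
qed

lemma th_eq:
  assumes "i \<le> 1" "1 \<le> x" "x \<le> N"
  shows "th i x = phiz zs i x"
proof -
  have "LinF \<epsilon> \<gamma> N 0 0 0 0 (\<lambda>i x. th i x - phiz zs i x) v = 0" for v
    unfolding LinF_sub_r[where a=a and b=b and c=c and d=d] using LinF_th_all phiz_sol by simp
  then have "th i x - phiz zs i x = 0" by (rule uniq[OF _ assms])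
  then show ?thesis by simp
qed

lemma cvec_zs: "cvec \<epsilon> \<gamma> N k \<bullet> vector [a, b, c, d] = zs $ k"
  unfolding cvec_def zs_def by (simp add: matrix_vector_mult_def inner_vec_def)

end

theorem mainTheorem7:
  fixes \<sigma> :: int and N :: nat and \<epsilon> \<gamma> \<rho>L0 \<rho>L1 \<rho>R0 \<rho>R1 :: real and \<mu> :: "cfg pmf"
  assumes "\<sigma> \<in> {-1, 0, 1}"
    and "0 < \<epsilon>" and "\<epsilon> \<le> 1" and "0 < \<gamma>" and "2 \<le> N"
    and "0 \<le> \<rho>L0" and "0 \<le> \<rho>L1" and "0 \<le> \<rho>R0" and "0 \<le> \<rho>R1"
    and "\<sigma> = -1 \<longrightarrow> \<rho>L0 \<le> 1 \<and> \<rho>L1 \<le> 1 \<and> \<rho>R0 \<le> 1 \<and> \<rho>R1 \<le> 1"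
    and "stationary \<sigma> N \<epsilon> \<gamma> (\<lambda>i. if i = 0 then \<rho>L0 else \<rho>L1)
                              (\<lambda>i. if i = 0 then \<rho>R0 else \<rho>R1) \<mu>"
  shows "\<forall>x \<in> {1..N}.
     (let \<rho> = vector [\<rho>L0, \<rho>L1, \<rho>R0, \<rho>R1] :: real^4;
          a1 = alpha1 \<epsilon> \<gamma>; a2 = alpha2 \<epsilon> \<gamma>;
          c1 = cvec \<epsilon> \<gamma> N 1 \<bullet> \<rho>; c2 = cvec \<epsilon> \<gamma> N 2 \<bullet> \<rho>;
          c3 = cvec \<epsilon> \<gamma> N 3 \<bullet> \<rho>; c4 = cvec \<epsilon> \<gamma> N 4 \<bullet> \<rho>
      in measure_pmf.expectation \<mu> (\<lambda>\<eta>. real (\<eta> 0 x))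
           = c1 * real x + c2 + \<epsilon> * c3 * a1 ^ x + \<epsilon> * c4 * a2 ^ x
       \<and> measure_pmf.expectation \<mu> (\<lambda>\<eta>. real (\<eta> 1 x))
           = c1 * real x + c2 - c3 * a1 ^ x - c4 * a2 ^ x)"
proof -
  interpret stat \<sigma> N \<epsilon> \<gamma> \<rho>L0 \<rho>L1 \<rho>R0 \<rho>R1 \<mu>
    by unfold_locales (use assms in auto)
  show ?thesis
  proof
    fix x assume "x \<in> {1..N}"
    then have x: "1 \<le> x" "x \<le> N" by auto
    have e0: "th 0 x = phiz zs 0 x" and e1: "th 1 x = phiz zs 1 x" using th_eq x by auto
    show "let \<rho> = vector [\<rho>L0, \<rho>L1, \<rho>R0, \<rho>R1] :: real^4;
          a1 = alpha1 \<epsilon> \<gamma>; a2 = alpha2 \<epsilon> \<gamma>;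
          c1 = cvec \<epsilon> \<gamma> N 1 \<bullet> \<rho>; c2 = cvec \<epsilon> \<gamma> N 2 \<bullet> \<rho>;
          c3 = cvec \<epsilon> \<gamma> N 3 \<bullet> \<rho>; c4 = cvec \<epsilon> \<gamma> N 4 \<bullet> \<rho>
      in measure_pmf.expectation \<mu> (\<lambda>\<eta>. real (\<eta> 0 x))
           = c1 * real x + c2 + \<epsilon> * c3 * a1 ^ x + \<epsilon> * c4 * a2 ^ x
       \<and> measure_pmf.expectation \<mu> (\<lambda>\<eta>. real (\<eta> 1 x))
           = c1 * real x + c2 - c3 * a1 ^ x - c4 * a2 ^ x"
      unfolding Let_def cvec_zs using e0 e1 unfolding th_def phiz_def by simp
  qed
qed


end
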